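(* Under the hypotheses and notation below, $$S^-(z;x,y;t):=\sum_{k\ge0}S^{[-k]}(x,y;t)z^k=\frac{\sqrt{D\,\Delta(\bar x)\,\Delta(z)}}{(1-z\bar x)K(x,y)}=\frac{\sqrt{\Delta(z)}}{1-z\bar x}\,S(x,y;t).$$
   Context: $\mathcal H=\{(k,0):k\le0\}$; $A\subset\mathbb{Z}^2$ is finite, symmetric ($(i,j)\in A\Rightarrow(i,-j)\in A$), with small height variations ($|j|\le1$), with $A_1\ne0$, and additionally reversal-symmetric ($(i,j)\in A\Rightarrow(-i,-j)\in A$). For $k\in\mathbb{Z}$, $a^{[k]}_{i,j}(n)$ is the number of walks $(w_0,\dots,w_n)$ with steps in $A$, $w_0=(k,0)$, $w_n=(i,j)$, and $w_m\notin\mathcal H$ for $1\le m\le n$; $S^{[k]}(x,y;t)=\sum_{n,i,j}a^{[k]}_{i,j}(n)x^iy^jt^n$, and $S=S^{[0]}$. $\bar x=1/x$, $\bar y=1/y$, $A_0(x)=\sum_{(i,0)\in A}x^i$, $A_1(x)=\sum_{(i,1)\in A}x^i$, $K(x,y)=1-tA_0(x)-t(y+\bar y)A_1(x)$, $\delta(x)=(1-tA_0(x))^2-4t^2A_1(x)^2$, and $(D,\Delta(x),\bar\Delta(\bar x))$ its canonical factorization (unique triple of power series in $t$ with $\delta=D\Delta(x)\bar\Delta(\bar x)$, $D$ real coefficients, $\Delta(x)$ coefficients in $\mathbb{R}[x]$, $\bar\Delta(\bar x)$ in $\mathbb{R}[\bar x]$, all normalized to $1$ at $t=0$ and $\Delta(0;t)=\bar\Delta(0;t)=1$);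 under reversal symmetry $\bar\Delta(\bar x)=\Delta(\bar x)$. Square roots have constant term $1$; $1/K$ is expanded in $t$. *)

theory Defs
  imports Complex_Main
begin

text \<open>Formal series in t, z (nonnegative exponents) with Laurent coefficients in x, y.
  A series F is represented by its coefficient function: F n k i j is the
  coefficient of t^n z^k x^i y^j.\<close>

type_synonym ser = "nat \<Rightarrow> nat \<Rightarrow> int \<Rightarrow> int \<Rightarrow> real"

definition ser_good :: "ser \<Rightarrow> bool" where
  "ser_good f \<longleftrightarrow> (\<forall>n k. finite {p. f n k (fst p) (snd p) \<noteq> 0})"

definition ser_one :: ser where
  "ser_one n k i j = (if n = 0 \<and> k = 0 \<and> i = 0 \<and> j = 0 then 1 else 0)"

definition ser_add :: "ser \<Rightarrow> ser \<Rightarrow> ser" where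
  "ser_add f g n k i j = f n k i j + g n k i j"

definition ser_diff :: "ser \<Rightarrow> ser \<Rightarrow> ser" where
  "ser_diff f g n k i j = f n k i j - g n k i j"

definition ser_scale :: "real \<Rightarrow> ser \<Rightarrow> ser" where
  "ser_scale c f n k i j = c * f n k i j"

text \<open>Cauchy product (the inner sum is finite whenever f is well-formed).\<close>
definition ser_mult :: "ser \<Rightarrow> ser \<Rightarrow> ser" where
  "ser_mult f g n k i j =
     (\<Sum>n1\<le>n. \<Sum>k1\<le>k. \<Sum>p\<in>{p. f n1 k1 (fst p) (snd p) \<noteq> 0}.
        f n1 k1 (fst p) (snd p) * g (n - n1) (k - k1) (i - fst p) (j - snd p))"

definition ser_inv :: "ser \<Rightarrow> ser" where
  "ser_inv f = (THE g. ser_good g \<and> ser_mult f g = ser_one)"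

definition ser_sqrt :: "ser \<Rightarrow> ser" where
  "ser_sqrt f = (THE g. ser_good g \<and> g 0 0 0 0 = 1 \<and> ser_mult g g = f)"

text \<open>Substitutions x := 1/x and x := z (for series not involving z).\<close>
definition ser_at_xbar :: "ser \<Rightarrow> ser" where
  "ser_at_xbar f n k i j = f n k (- i) j"

definition ser_x_to_z :: "ser \<Rightarrow> ser" where
  "ser_x_to_z f n k i j = (if i = 0 then f n 0 (int k) j else 0)"

definition in_H :: "int \<times> int \<Rightarrow> bool" where
  "in_H p \<longleftrightarrow> snd p = 0 \<and> fst p \<le> 0"

definition walk_pos :: "int \<Rightarrow> (int \<times> int) list \<Rightarrow> nat \<Rightarrow> int \<times> int" where
  "walk_pos k ss m = (k + sum_list (map fst (take m ss)), sum_list (map snd (take m ss)))"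

definition walk_count :: "(int \<times> int) set \<Rightarrow> int \<Rightarrow> nat \<Rightarrow> int \<Rightarrow> int \<Rightarrow> nat" where
  "walk_count A k n i j = card {ss. set ss \<subseteq> A \<and> length ss = n \<and> walk_pos k ss n = (i, j)
                                    \<and> (\<forall>m\<in>{1..n}. \<not> in_H (walk_pos k ss m))}"

definition S_ser :: "(int \<times> int) set \<Rightarrow> ser" where
  "S_ser A n k i j = (if k = 0 then real (walk_count A 0 n i j) else 0)"

definition Sminus_ser :: "(int \<times> int) set \<Rightarrow> ser" where
  "Sminus_ser A n k i j = real (walk_count A (- int k) n i j)"

definition tA0 :: "(int \<times> int) set \<Rightarrow> ser" where
  "tA0 A n k i j = (if n = 1 \<and> k = 0 \<and> j = 0 \<and> (i, 0) \<in> A then 1 else 0)"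

definition tA1 :: "(int \<times> int) set \<Rightarrow> ser" where
  "tA1 A n k i j = (if n = 1 \<and> k = 0 \<and> j = 0 \<and> (i, 1) \<in> A then 1 else 0)"

definition y_plus_ybar :: ser where
  "y_plus_ybar n k i j = (if n = 0 \<and> k = 0 \<and> i = 0 \<and> (j = 1 \<or> j = -1) then 1 else 0)"

definition z_xbar :: ser where
  "z_xbar n k i j = (if n = 0 \<and> k = 1 \<and> i = -1 \<and> j = 0 then 1 else 0)"

definition K_ser :: "(int \<times> int) set \<Rightarrow> ser" where
  "K_ser A = ser_diff (ser_diff ser_one (tA0 A)) (ser_mult y_plus_ybar (tA1 A))"

definition delta_ser :: "(int \<times> int) set \<Rightarrow> ser" where
  "delta_ser A = ser_diff (ser_mult (ser_diff ser_one (tA0 A)) (ser_diff ser_one (tA0 A)))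
                          (ser_scale 4 (ser_mult (tA1 A) (tA1 A)))"

definition canonical_factorization :: "(int \<times> int) set \<Rightarrow> ser \<times> ser \<times> ser \<Rightarrow> bool" where
  "canonical_factorization A tr \<longleftrightarrow>
     (case tr of (D, Dl, Dlb) \<Rightarrow>
        (\<forall>n k i j. D n k i j \<noteq> 0 \<longrightarrow> k = 0 \<and> i = 0 \<and> j = 0) \<and>
        (\<forall>n k i j. Dl n k i j \<noteq> 0 \<longrightarrow> k = 0 \<and> j = 0 \<and> i \<ge> 0) \<and> ser_good Dl \<and>
        (\<forall>n k i j. Dlb n k i j \<noteq> 0 \<longrightarrow> k = 0 \<and> j = 0 \<and> i \<le> 0) \<and> ser_good Dlb \<and>
        D 0 0 0 0 = 1 \<and>
        (\<forall>i. Dl 0 0 i 0 = (if i = 0 then 1 else 0)) \<and>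
        (\<forall>i. Dlb 0 0 i 0 = (if i = 0 then 1 else 0)) \<and>
        (\<forall>n. Dl n 0 0 0 = (if n = 0 then 1 else 0)) \<and>
        (\<forall>n. Dlb n 0 0 0 = (if n = 0 then 1 else 0)) \<and>
        delta_ser A = ser_mult D (ser_mult Dl Dlb))"

definition canD :: "(int \<times> int) set \<Rightarrow> ser" where
  "canD A = fst (THE tr. canonical_factorization A tr)"

definition canDelta :: "(int \<times> int) set \<Rightarrow> ser" where
  "canDelta A = fst (snd (THE tr. canonical_factorization A tr))"

end

theory Submission
  imports Defs "HOL-Library.Poly_Mapping" "HOL-Computational_Algebra.Formal_Power_Series"
begin

unbundle fps_syntax
abbreviation lookup :: "('a \<Rightarrow>\<^sub>0 'b::zero) \<Rightarrow> 'a \<Rightarrow> 'b" where "lookup \<equiv> poly_mapping.lookup"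
abbreviation keys :: "('a \<Rightarrow>\<^sub>0 'b::zero) \<Rightarrow> 'a set" where "keys \<equiv> Poly_Mapping.keys"

instance poly_mapping :: ("{ordered_cancel_comm_monoid_add, linorder}", idom) idom ..

type_synonym L = "int \<Rightarrow>\<^sub>0 (int \<Rightarrow>\<^sub>0 real)"
type_synonym T = "L fps fps"

definition toT :: "ser \<Rightarrow> T" where
  "toT f = Abs_fps (\<lambda>n. Abs_fps (\<lambda>k. Abs_poly_mapping (\<lambda>i. Abs_poly_mapping (\<lambda>j. f n k i j))))"

definition fromT :: "T \<Rightarrow> ser" where
  "fromT F n k i j = lookup (lookup (F $ n $ k) i) j"

lemma fromT_toT:
  assumes "ser_good f" shows "fromT (toT f) = f"
proof (intro ext)
  fix n k i j
  have fin: "finite {p. f n k (fst p) (snd p) \<noteq> 0}" using assms unfolding ser_good_def by blast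
  have f1: "finite {j. f n k i j \<noteq> 0}"
  proof -
    have "{j. f n k i j \<noteq> 0} \<subseteq> snd ` {p. f n k (fst p) (snd p) \<noteq> 0}"
    proof
      fix j assume "j \<in> {j. f n k i j \<noteq> 0}"
      then have "(i, j) \<in> {p. f n k (fst p) (snd p) \<noteq> 0}" by simp
      then show "j \<in> snd ` {p. f n k (fst p) (snd p) \<noteq> 0}" by (rule image_eqI[rotated]) simp
    qed
    thus ?thesis using fin finite_surj by blast
  qed
  have f2: "finite {i. Abs_poly_mapping (\<lambda>j. f n k i j) \<noteq> 0}"
  proof -
    have "{i. Abs_poly_mapping (\<lambda>j. f n k i j) \<noteq> 0} \<subseteq> fst ` {p. f n k (fst p) (snd p) \<noteq> 0}"
    proof
      fix i assume "i \<in> {i. Abs_poly_mapping (\<lambda>j. f n k i j) \<noteq> 0}"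
      then have A: "Abs_poly_mapping (\<lambda>j. f n k i j) \<noteq> 0" by simp
      have "\<exists>j. f n k i j \<noteq> 0"
      proof (rule ccontr)
        assume "\<not> (\<exists>j. f n k i j \<noteq> 0)"
        then have "f n k i = (\<lambda>j. 0)" by auto
        with A show False by simp
      qed
      then obtain j where "f n k i j \<noteq> 0" by blast
      then have "(i, j) \<in> {p. f n k (fst p) (snd p) \<noteq> 0}" by simp
      then show "i \<in> fst ` {p. f n k (fst p) (snd p) \<noteq> 0}" by (rule image_eqI[rotated]) simp
    qed
    thus ?thesis using fin finite_surj by blast
  qed
  have f1': "\<And>i. finite {j. f n k i j \<noteq> 0}"
  proof -
    fix i
    have "{j. f n k i j \<noteq> 0} \<subseteq> snd ` {p. f n k (fst p) (snd p) \<noteq> 0}"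
    proof
      fix j assume "j \<in> {j. f n k i j \<noteq> 0}"
      then have "(i, j) \<in> {p. f n k (fst p) (snd p) \<noteq> 0}" by simp
      then show "j \<in> snd ` {p. f n k (fst p) (snd p) \<noteq> 0}" by (rule image_eqI[rotated]) simp
    qed
    thus "finite {j. f n k i j \<noteq> 0}" using fin finite_surj by blast
  qed
  show "fromT (toT f) n k i j = f n k i j"
    unfolding fromT_def toT_def using f1' f2 by simp
qed

lemma toT_fromT [simp]: "toT (fromT F) = F"
  unfolding fromT_def toT_def by (simp add: lookup_inverse fps_nth_inverse)

lemma fromT_inj: "fromT F = fromT G \<Longrightarrow> F = G"
  by (metis toT_fromT)

lemma fromT_eqI: "(\<And>n k i j. fromT F n k i j = fromT G n k i j) \<Longrightarrow> F = G"
  by (rule fromT_inj) (intro ext)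

lemma good_fromT [simp]: "ser_good (fromT F)"
  unfolding ser_good_def
proof (intro allI)
  fix n k
  have "{p. fromT F n k (fst p) (snd p) \<noteq> 0} \<subseteq> Sigma (keys (F$n$k)) (\<lambda>i. keys (lookup (F$n$k) i))"
    by (auto simp: fromT_def in_keys_iff)
  moreover have "finite (Sigma (keys (F$n$k)) (\<lambda>i. keys (lookup (F$n$k) i)))" by simp
  ultimately show "finite {p. fromT F n k (fst p) (snd p) \<noteq> 0}" by (rule finite_subset)
qed

lemma lookup_mult_int:
  fixes p q :: "int \<Rightarrow>\<^sub>0 'b::comm_ring_1"
  shows "lookup (p * q) i = (\<Sum>l\<in>keys p. lookup p l * lookup q (i - l))"
proof -
  have e: "\<And>l. (\<Sum>q'. lookup q q' when i = l + q') = lookup q (i - l)"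
  proof -
    fix l
    have "(\<lambda>q'. lookup q q' when i = l + q') = (\<lambda>q'. lookup q q' when q' = i - l)"
      by (auto simp: when_def)
    then show "(\<Sum>q'. lookup q q' when i = l + q') = lookup q (i - l)" by (simp only: Sum_any_when_equal)
  qed
  have "lookup (p * q) i = (\<Sum>l. lookup p l * lookup q (i - l))"
    by (simp add: lookup_mult e)
  also have "\<dots> = (\<Sum>l\<in>keys p. lookup p l * lookup q (i - l))"
    by (rule Sum_any.expand_superset) (auto simp: in_keys_iff)
  finally show ?thesis .
qed

lemma lookupL_mult:
  fixes p q :: L
  shows "lookup (lookup (p * q) i) j =
     (\<Sum>a\<in>{a. lookup (lookup p (fst a)) (snd a) \<noteq> 0}. lookup (lookup p (fst a)) (snd a) * lookup (lookup q (i - fst a)) (j - snd a))"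
proof -
  have "lookup (lookup (p * q) i) j = (\<Sum>l\<in>keys p. lookup (lookup p l * lookup q (i - l)) j)"
    by (simp add: lookup_mult_int lookup_sum)
  also have "\<dots> = (\<Sum>l\<in>keys p. \<Sum>b\<in>keys (lookup p l). lookup (lookup p l) b * lookup (lookup q (i - l)) (j - b))"
    by (simp add: lookup_mult_int)
  also have "\<dots> = (\<Sum>a\<in>Sigma (keys p) (\<lambda>l. keys (lookup p l)). lookup (lookup p (fst a)) (snd a) * lookup (lookup q (i - fst a)) (j - snd a))"
    by (subst sum.Sigma) (auto simp: case_prod_beta)
  also have "Sigma (keys p) (\<lambda>l. keys (lookup p l)) = {a. lookup (lookup p (fst a)) (snd a) \<noteq> 0}"
    by (auto simp: in_keys_iff)
  finally show ?thesis .
qed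

lemma fromT_mult: "fromT (F * G) = ser_mult (fromT F) (fromT G)"
proof (intro ext)
  fix n k i j
  show "fromT (F * G) n k i j = ser_mult (fromT F) (fromT G) n k i j"
  proof -
    have "fromT (F * G) n k i j = (\<Sum>n1\<in>{0..n}. \<Sum>k1\<in>{0..k}. lookup (lookup (F $ n1 $ k1 * G $ (n - n1) $ (k - k1)) i) j)"
      unfolding fromT_def fps_mult_nth fps_sum_nth lookup_sum by simp
    also have "\<dots> = ser_mult (fromT F) (fromT G) n k i j"
      unfolding ser_mult_def fromT_def lookupL_mult atLeast0AtMost by (rule refl)
    finally show ?thesis .
  qed
qed


lemma fromT_toT': "ser_good f \<Longrightarrow> fromT (toT f) n k i j = f n k i j"
  by (simp add: fromT_toT)

lemma fromT_add [simp]: "fromT (F + G) n k i j = fromT F n k i j + fromT G n k i j"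
  by (simp add: fromT_def lookup_add)

lemma fromT_diff [simp]: "fromT (F - G) n k i j = fromT F n k i j - fromT G n k i j"
  by (simp add: fromT_def lookup_minus)

lemma fromT_uminus [simp]: "fromT (- F) n k i j = - fromT F n k i j"
  by (simp add: fromT_def)

lemma fromT_zero [simp]: "fromT 0 n k i j = 0"
  by (simp add: fromT_def)

lemma fromT_one [simp]: "fromT 1 n k i j = (if n = 0 \<and> k = 0 \<and> i = 0 \<and> j = 0 then 1 else 0)"
  by (simp add: fromT_def fps_one_nth lookup_one when_def)

lemma fromT_sum [simp]: "fromT (sum f S) n k i j = (\<Sum>x\<in>S. fromT (f x) n k i j)"
  by (simp add: fromT_def fps_sum_nth lookup_sum)

lemma fromT_mult': "fromT (F * G) n k i j = ser_mult (fromT F) (fromT G) n k i j"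
  by (simp add: fromT_mult)

lemma mult_nonzero_witness:
  assumes "fromT (F * G) n k i j \<noteq> 0"
  shows "\<exists>n1\<le>n. \<exists>k1\<le>k. \<exists>i1 j1. fromT F n1 k1 i1 j1 \<noteq> 0 \<and> fromT G (n - n1) (k - k1) (i - i1) (j - j1) \<noteq> 0"
proof -
  from assms have "ser_mult (fromT F) (fromT G) n k i j \<noteq> 0" by (simp add: fromT_mult)
  then obtain n1 where n1: "n1 \<in> {..n}" and
    "(\<Sum>k1\<le>k. \<Sum>p\<in>{p. fromT F n1 k1 (fst p) (snd p) \<noteq> 0}.
        fromT F n1 k1 (fst p) (snd p) * fromT G (n - n1) (k - k1) (i - fst p) (j - snd p)) \<noteq> 0"
    unfolding ser_mult_def by (meson sum.not_neutral_contains_not_neutral)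
  then obtain k1 where k1: "k1 \<in> {..k}" and
    "(\<Sum>p\<in>{p. fromT F n1 k1 (fst p) (snd p) \<noteq> 0}.
        fromT F n1 k1 (fst p) (snd p) * fromT G (n - n1) (k - k1) (i - fst p) (j - snd p)) \<noteq> 0"
    by (meson sum.not_neutral_contains_not_neutral)
  then obtain p where "fromT F n1 k1 (fst p) (snd p) * fromT G (n - n1) (k - k1) (i - fst p) (j - snd p) \<noteq> 0"
    by (meson sum.not_neutral_contains_not_neutral)
  then show ?thesis using n1 k1 by (intro exI[of _ n1] conjI exI[of _ k1] exI[of _ "fst p"] exI[of _ "snd p"]) auto
qed

definition cone :: "(nat \<Rightarrow> nat \<Rightarrow> int \<Rightarrow> int \<Rightarrow> bool) \<Rightarrow> T \<Rightarrow> bool" where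
  "cone C F \<longleftrightarrow> (\<forall>n k i j. fromT F n k i j \<noteq> 0 \<longrightarrow> C n k i j)"

lemma coneD: "cone C F \<Longrightarrow> fromT F n k i j \<noteq> 0 \<Longrightarrow> C n k i j"
  unfolding cone_def by blast

lemma coneD': "cone C F \<Longrightarrow> \<not> C n k i j \<Longrightarrow> fromT F n k i j = 0"
  unfolding cone_def by blast

lemma coneI: "(\<And>n k i j. fromT F n k i j \<noteq> 0 \<Longrightarrow> C n k i j) \<Longrightarrow> cone C F"
  unfolding cone_def by blast

lemma cone_mult:
  assumes "cone C1 F" "cone C2 G"
    and "\<And>n1 k1 i1 j1 n2 k2 i2 j2. C1 n1 k1 i1 j1 \<Longrightarrow> C2 n2 k2 i2 j2 \<Longrightarrow> C3 (n1+n2) (k1+k2) (i1+i2) (j1+j2)"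
  shows "cone C3 (F * G)"
proof (rule coneI)
  fix n k i j assume "fromT (F * G) n k i j \<noteq> 0"
  then obtain n1 k1 i1 j1 where w: "n1 \<le> n" "k1 \<le> k" "fromT F n1 k1 i1 j1 \<noteq> 0"
      "fromT G (n - n1) (k - k1) (i - i1) (j - j1) \<noteq> 0"
    using mult_nonzero_witness by blast
  have "C3 (n1 + (n - n1)) (k1 + (k - k1)) (i1 + (i - i1)) (j1 + (j - j1))"
    using assms(3)[OF coneD[OF assms(1) w(3)] coneD[OF assms(2) w(4)]] .
  then show "C3 n k i j" using w(1,2) by simp
qed

lemma cone_add: "cone C F \<Longrightarrow> cone C G \<Longrightarrow> cone C (F + G)"
  unfolding cone_def by (metis add.right_neutral add_0 fromT_add)

lemma cone_diff: "cone C F \<Longrightarrow> cone C G \<Longrightarrow> cone C (F - G)"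
  unfolding cone_def by (metis diff_zero diff_self fromT_diff)

lemma cone_uminus: "cone C F \<Longrightarrow> cone C (- F)"
  unfolding cone_def by simp

lemma cone_zero [simp]: "cone C 0"
  unfolding cone_def by simp

lemma cone_one: "C 0 0 0 0 \<Longrightarrow> cone C 1"
  unfolding cone_def by (simp split: if_splits)

lemma cone_mono: "cone C F \<Longrightarrow> (\<And>n k i j. C n k i j \<Longrightarrow> C' n k i j) \<Longrightarrow> cone C' F"
  unfolding cone_def by blast

lemma cone_conj: "cone C F \<Longrightarrow> cone C' F \<Longrightarrow> cone (\<lambda>n k i j. C n k i j \<and> C' n k i j) F"
  unfolding cone_def by blast

lemma cone_sum: "(\<And>x. x \<in> S \<Longrightarrow> cone C (f x)) \<Longrightarrow> cone C (sum f S)"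
proof (induction S rule: infinite_finite_induct)
  case (insert x F) then show ?case by (simp add: cone_add)
qed simp_all

lemma cone_fix:
  assumes eq: "G = A + H * G" and cA: "cone C A" and cH: "cone C H"
    and H0: "\<And>k i j. fromT H 0 k i j = 0"
    and Cadd: "\<And>n1 k1 i1 j1 n2 k2 i2 j2. C n1 k1 i1 j1 \<Longrightarrow> C n2 k2 i2 j2 \<Longrightarrow> C (n1+n2) (k1+k2) (i1+i2) (j1+j2)"
  shows "cone C G"
proof -
  have "\<forall>k i j. fromT G n k i j \<noteq> 0 \<longrightarrow> C n k i j" for n
  proof (induction n rule: less_induct)
    case (less n)
    show ?case
    proof (intro allI impI)
      fix k i j assume nz: "fromT G n k i j \<noteq> 0"
      have "fromT G n k i j = fromT A n k i j + fromT (H * G) n k i j"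
        by (subst eq) simp
      with nz have "fromT A n k i j \<noteq> 0 \<or> fromT (H * G) n k i j \<noteq> 0" by auto
      then show "C n k i j"
      proof
        assume "fromT A n k i j \<noteq> 0" then show ?thesis using coneD[OF cA] by blast
      next
        assume "fromT (H * G) n k i j \<noteq> 0"
        then obtain n1 k1 i1 j1 where w: "n1 \<le> n" "k1 \<le> k" "fromT H n1 k1 i1 j1 \<noteq> 0"
            "fromT G (n - n1) (k - k1) (i - i1) (j - j1) \<noteq> 0"
          using mult_nonzero_witness by blast
        have "n1 \<noteq> 0" using w(3) H0 by (cases n1) auto
        then have "n - n1 < n" using w(1) by simp
        then have "C (n - n1) (k - k1) (i - i1) (j - j1)" using less.IH w(4) by blast
        from Cadd[OF coneD[OF cH w(3)] this] show ?thesis using w(1,2) by simp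
      qed
    qed
  qed
  then show ?thesis unfolding cone_def by blast
qed


lemma good_subset:
  assumes "ser_good f" "\<And>n k i j. g n k i j \<noteq> 0 \<Longrightarrow> f n k i j \<noteq> 0"
  shows "ser_good g"
  unfolding ser_good_def
proof (intro allI)
  fix n k
  have "{p. g n k (fst p) (snd p) \<noteq> 0} \<subseteq> {p. f n k (fst p) (snd p) \<noteq> 0}" using assms(2) by auto
  moreover have "finite {p. f n k (fst p) (snd p) \<noteq> 0}" using assms(1) unfolding ser_good_def by blast
  ultimately show "finite {p. g n k (fst p) (snd p) \<noteq> 0}" by (rule finite_subset)
qed

lemma good_restrict: "ser_good (\<lambda>n k i j. if P n k i j then fromT F n k i j else 0)"
  by (rule good_subset[OF good_fromT[of F]]) (simp split: if_splits)

definition proj :: "(nat \<Rightarrow> nat \<Rightarrow> int \<Rightarrow> int \<Rightarrow> bool) \<Rightarrow> T \<Rightarrow> T" where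
  "proj C F = toT (\<lambda>n k i j. if C n k i j then fromT F n k i j else 0)"

lemma fromT_proj [simp]: "fromT (proj C F) n k i j = (if C n k i j then fromT F n k i j else 0)"
  unfolding proj_def by (simp add: fromT_toT good_restrict)

lemma proj_add: "proj C (F + G) = proj C F + proj C G"
  by (rule fromT_eqI) simp

lemma proj_diff: "proj C (F - G) = proj C F - proj C G"
  by (rule fromT_eqI) simp

lemma proj_id: "cone C F \<Longrightarrow> proj C F = F"
  by (rule fromT_eqI) (auto simp: cone_def)

lemma proj_zero:
  assumes "cone C' F" "\<And>n k i j. C' n k i j \<Longrightarrow> \<not> C n k i j" shows "proj C F = 0"
proof (rule fromT_eqI)
  fix n k i j
  show "fromT (proj C F) n k i j = fromT 0 n k i j"
  proof (cases "C n k i j")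
    case True
    then have "\<not> C' n k i j" using assms(2) by blast
    then show ?thesis using coneD'[OF assms(1)] True by simp
  qed simp
qed

lemma cone_proj: "cone C (proj C F)"
  by (rule coneI) (simp split: if_splits)

lemma nth_eqI: "(\<And>k i j. fromT F n k i j = fromT G n k i j) \<Longrightarrow> F $ n = G $ n"
  unfolding fromT_def by (intro fps_ext poly_mapping_eqI) simp

lemma nth_eqD: "F $ n = G $ n \<Longrightarrow> fromT F n k i j = fromT G n k i j"
  unfolding fromT_def by simp

lemma nth0_one:
  assumes "cone (\<lambda>n k i j. 1 \<le> n) (F - 1)" shows "F $ 0 = 1"
proof -
  have "F $ 0 = (1::T) $ 0"
  proof (rule nth_eqI)
    fix k i j
    from coneD'[OF assms, of 0 k i j] show "fromT F 0 k i j = fromT 1 0 k i j" by simp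
  qed
  then show ?thesis by simp
qed

definition inv1 :: "T \<Rightarrow> T" where "inv1 F = fps_right_inverse F 1"

lemma inv1: "F $ 0 = 1 \<Longrightarrow> F * inv1 F = 1"
  unfolding inv1_def by (rule fps_right_inverse) simp

lemma inv1': "F $ 0 = 1 \<Longrightarrow> inv1 F * F = 1"
  using inv1 by (simp add: mult.commute)

lemma inv_unique:
  assumes "(F::T) * G = 1" "F * G' = 1" shows "G = G'"
proof -
  have "G = G * (F * G')" using assms(2) by simp
  also have "\<dots> = (F * G) * G'" by (simp only: ac_simps)
  finally show ?thesis using assms(1) by simp
qed

lemma cone_inverse:
  assumes "cone C F" "F $ 0 = 1" "F * G = 1" "C 0 0 0 0"
    and Cadd: "\<And>n1 k1 i1 j1 n2 k2 i2 j2. C n1 k1 i1 j1 \<Longrightarrow> C n2 k2 i2 j2 \<Longrightarrow> C (n1+n2) (k1+k2) (i1+i2) (j1+j2)"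
  shows "cone C G"
proof (rule cone_fix[where A=1 and H="1 - F"])
  show "G = 1 + (1 - F) * G" using assms(3) by (simp add: algebra_simps)
  show "cone C 1" using assms(4) by (rule cone_one)
  show "cone C (1 - F)" using assms(1,4) by (intro cone_diff cone_one)
  have "F $ 0 = (1::T) $ 0" using assms(2) by simp
  from nth_eqD[OF this] show "fromT (1 - F) 0 k i j = 0" for k i j by simp
qed (rule Cadd)

lemma mult_single_nk:
  assumes supp: "\<And>n k i j. fromT F n k i j \<noteq> 0 \<Longrightarrow> n = n0 \<and> k = k0"
    and S: "finite S" "\<And>i j. fromT F n0 k0 i j \<noteq> 0 \<Longrightarrow> (i, j) \<in> S"
  shows "fromT (F * G) n k i j = (if n0 \<le> n \<and> k0 \<le> k then
           (\<Sum>p\<in>S. fromT F n0 k0 (fst p) (snd p) * fromT G (n - n0) (k - k0) (i - fst p) (j - snd p)) else 0)"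
proof -
  define t where "t n1 k1 p = fromT F n1 k1 (fst p) (snd p) * fromT G (n - n1) (k - k1) (i - fst p) (j - snd p)" for n1 k1 p
  have inner: "(\<Sum>p\<in>{p. fromT F n1 k1 (fst p) (snd p) \<noteq> 0}. t n1 k1 p) =
      (if n1 = n0 \<and> k1 = k0 then (\<Sum>p\<in>S. t n0 k0 p) else 0)" for n1 k1
  proof (cases "n1 = n0 \<and> k1 = k0")
    case True
    have "(\<Sum>p\<in>{p. fromT F n1 k1 (fst p) (snd p) \<noteq> 0}. t n1 k1 p) = (\<Sum>p\<in>S. t n1 k1 p)"
    proof (rule sum.mono_neutral_left[OF S(1)])
      show "{p. fromT F n1 k1 (fst p) (snd p) \<noteq> 0} \<subseteq> S" using S(2) True by auto
      show "\<forall>p\<in>S - {p. fromT F n1 k1 (fst p) (snd p) \<noteq> 0}. t n1 k1 p = 0" by (simp add: t_def)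
    qed
    then show ?thesis using True by simp
  next
    case False
    have e: "{p. fromT F n1 k1 (fst p) (snd p) \<noteq> 0} = {}" using supp False by blast
    show ?thesis unfolding e using False by (simp only: sum.empty if_not_P if_False)
  qed
  have "fromT (F * G) n k i j = (\<Sum>n1\<le>n. \<Sum>k1\<le>k. if n1 = n0 \<and> k1 = k0 then (\<Sum>p\<in>S. t n0 k0 p) else 0)"
    unfolding fromT_mult' ser_mult_def t_def[symmetric] inner by (rule refl)
  also have "\<dots> = (\<Sum>n1\<le>n. if n1 = n0 then (\<Sum>k1\<le>k. if k1 = k0 then (\<Sum>p\<in>S. t n0 k0 p) else 0) else 0)"
  proof (rule sum.cong[OF refl])
    fix n1 assume "n1 \<in> {..n}"
    show "(\<Sum>k1\<le>k. if n1 = n0 \<and> k1 = k0 then sum (t n0 k0) S else 0) =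
      (if n1 = n0 then \<Sum>k1\<le>k. if k1 = k0 then sum (t n0 k0) S else 0 else 0)"
      by (cases "n1 = n0") simp_all
  qed
  also have "\<dots> = (if n0 \<le> n \<and> k0 \<le> k then (\<Sum>p\<in>S. t n0 k0 p) else 0)"
    by (cases "k0 \<le> k") (simp_all add: sum.delta)
  finally show ?thesis unfolding t_def .
qed

definition monoT :: "nat \<Rightarrow> nat \<Rightarrow> int \<Rightarrow> int \<Rightarrow> real \<Rightarrow> T" where
  "monoT n0 k0 i0 j0 c = toT (\<lambda>n k i j. if n = n0 \<and> k = k0 \<and> i = i0 \<and> j = j0 then c else 0)"

lemma good_mono: "ser_good (\<lambda>n k i j. if n = n0 \<and> k = k0 \<and> i = i0 \<and> j = j0 then c else 0)"
  unfolding ser_good_def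
proof (intro allI)
  fix n k
  have "{p. (if n = n0 \<and> k = k0 \<and> fst p = i0 \<and> snd p = j0 then c else 0) \<noteq> 0} \<subseteq> {(i0, j0)}" by auto
  then show "finite {p. (if n = n0 \<and> k = k0 \<and> fst p = i0 \<and> snd p = j0 then c else 0) \<noteq> 0}"
    by (rule finite_subset) simp
qed

lemma fromT_mono [simp]: "fromT (monoT n0 k0 i0 j0 c) n k i j = (if n = n0 \<and> k = k0 \<and> i = i0 \<and> j = j0 then c else 0)"
  unfolding monoT_def by (simp add: fromT_toT good_mono)

lemma fromT_mono_mult: "fromT (monoT n0 k0 i0 j0 c * G) n k i j =
    (if n0 \<le> n \<and> k0 \<le> k then c * fromT G (n - n0) (k - k0) (i - i0) (j - j0) else 0)"
proof -
  have "fromT (monoT n0 k0 i0 j0 c * G) n k i j = (if n0 \<le> n \<and> k0 \<le> k then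
           (\<Sum>p\<in>{(i0,j0)}. fromT (monoT n0 k0 i0 j0 c) n0 k0 (fst p) (snd p) * fromT G (n - n0) (k - k0) (i - fst p) (j - snd p)) else 0)"
    by (rule mult_single_nk) (simp_all split: if_splits)
  then show ?thesis by simp
qed


section \<open>y-coefficient extraction\<close>

definition Ym :: "int \<Rightarrow> T \<Rightarrow> T" where
  "Ym m F = toT (\<lambda>n k i j. if j = 0 then fromT F n k i m else 0)"

lemma good_Ym: "ser_good (\<lambda>n k i j. if j = 0 then fromT F n k i m else 0)"
  unfolding ser_good_def
proof (intro allI)
  fix n k
  have "finite {p. fromT F n k (fst p) (snd p) \<noteq> 0}" using good_fromT[of F] unfolding ser_good_def by blast
  then have fin: "finite ((\<lambda>p. (fst p, 0::int)) ` {p. fromT F n k (fst p) (snd p) \<noteq> 0})" by simp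
  have sub: "{p::int\<times>int. (if snd p = 0 then fromT F n k (fst p) m else 0) \<noteq> 0} \<subseteq> (\<lambda>p. (fst p, 0::int)) ` {p. fromT F n k (fst p) (snd p) \<noteq> 0}"
  proof
    fix p :: "int \<times> int" assume "p \<in> {p::int\<times>int. (if snd p = 0 then fromT F n k (fst p) m else 0) \<noteq> 0}"
    then have "snd p = 0" "fromT F n k (fst p) m \<noteq> 0" by (auto split: if_splits)
    then have "(fst p, m) \<in> {p. fromT F n k (fst p) (snd p) \<noteq> 0}" "p = (\<lambda>p. (fst p, 0::int)) (fst p, m)"
      by (simp_all add: prod_eq_iff)
    then show "p \<in> (\<lambda>p. (fst p, 0::int)) ` {p. fromT F n k (fst p) (snd p) \<noteq> 0}" by (rule rev_image_eqI)
  qed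
  show "finite {p::int\<times>int. (if snd p = 0 then fromT F n k (fst p) m else 0) \<noteq> 0}" by (rule finite_subset[OF sub fin])
qed

lemma fromT_Ym [simp]: "fromT (Ym m F) n k i j = (if j = 0 then fromT F n k i m else 0)"
  unfolding Ym_def by (simp add: fromT_toT good_Ym)

lemma Ym_add: "Ym m (F + G) = Ym m F + Ym m G"
  by (rule fromT_eqI) simp

lemma Ym_diff: "Ym m (F - G) = Ym m F - Ym m G"
  by (rule fromT_eqI) simp

lemma Ym_one: "Ym m 1 = (if m = 0 then 1 else 0)"
  by (rule fromT_eqI) simp

lemma cone_Ym: "cone (\<lambda>n k i j. j = 0) (Ym m F)"
  by (rule coneI) (simp split: if_splits)

lemma Ym_mult:
  assumes yf: "cone (\<lambda>n k i j. j = 0) F"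
  shows "Ym m (F * G) = F * Ym m G"
proof (rule fromT_eqI)
  fix n k i j
  have "fromT (F * Ym m G) n k i j = (\<Sum>n1\<le>n. \<Sum>k1\<le>k. \<Sum>p\<in>{p. fromT F n1 k1 (fst p) (snd p) \<noteq> 0}.
      if j = 0 then fromT F n1 k1 (fst p) (snd p) * fromT G (n - n1) (k - k1) (i - fst p) (m - snd p) else 0)"
    unfolding fromT_mult' ser_mult_def
  proof (intro sum.cong refl)
    fix n1 k1 p assume "p \<in> {p. fromT F n1 k1 (fst p) (snd p) \<noteq> 0}"
    then have "snd p = 0" using coneD[OF yf] by simp
    then show "fromT F n1 k1 (fst p) (snd p) * fromT (Ym m G) (n - n1) (k - k1) (i - fst p) (j - snd p) =
      (if j = 0 then fromT F n1 k1 (fst p) (snd p) * fromT G (n - n1) (k - k1) (i - fst p) (m - snd p) else 0)"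
      by simp
  qed
  also have "\<dots> = (if j = 0 then fromT (F * G) n k i m else 0)"
    unfolding fromT_mult' ser_mult_def by simp
  finally show "fromT (Ym m (F * G)) n k i j = fromT (F * Ym m G) n k i j" by simp
qed

lemma good_yy: "ser_good y_plus_ybar"
  unfolding ser_good_def
proof (intro allI)
  fix n k
  have "{p. y_plus_ybar n k (fst p) (snd p) \<noteq> 0} \<subseteq> {(0,1),(0,-1)}"
    by (auto simp: y_plus_ybar_def prod_eq_iff split: if_splits)
  then show "finite {p. y_plus_ybar n k (fst p) (snd p) \<noteq> 0}" by (rule finite_subset) simp
qed

lemma fromT_yy_mult: "fromT (toT y_plus_ybar * G) n k i j = fromT G n k i (j - 1) + fromT G n k i (j + 1)"
proof -
  have "fromT (toT y_plus_ybar * G) n k i j = (if 0 \<le> n \<and> 0 \<le> k then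
      (\<Sum>p\<in>{(0,1),(0,-1)}. fromT (toT y_plus_ybar) 0 0 (fst p) (snd p) * fromT G (n - 0) (k - 0) (i - fst p) (j - snd p)) else 0)"
    by (rule mult_single_nk) (auto simp: fromT_toT good_yy y_plus_ybar_def split: if_splits)
  then show ?thesis by (simp add: fromT_toT good_yy y_plus_ybar_def)
qed

lemma Ym_yy: "Ym m (toT y_plus_ybar * G) = Ym (m - 1) G + Ym (m + 1) G"
  by (rule fromT_eqI) (simp add: fromT_yy_mult)

section \<open>Reflections\<close>

definition rmap :: "(int \<times> int \<Rightarrow> int \<times> int) \<Rightarrow> T \<Rightarrow> T" where
  "rmap \<sigma> F = toT (\<lambda>n k i j. fromT F n k (fst (\<sigma> (i, j))) (snd (\<sigma> (i, j))))"

locale refl_map =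
  fixes \<sigma> :: "int \<times> int \<Rightarrow> int \<times> int"
  assumes invol: "\<And>p. \<sigma> (\<sigma> p) = p"
    and lin: "\<And>a b c d. \<sigma> (a - c, b - d) = (fst (\<sigma> (a, b)) - fst (\<sigma> (c, d)), snd (\<sigma> (a, b)) - snd (\<sigma> (c, d)))"
begin

lemma inj: "inj \<sigma>"
  by (metis injI invol)

lemma zero: "\<sigma> (0, 0) = (0, 0)"
  using lin[of 0 0 0 0] by (simp add: prod_eq_iff)

lemma good: "ser_good (\<lambda>n k i j. fromT F n k (fst (\<sigma> (i, j))) (snd (\<sigma> (i, j))))"
  unfolding ser_good_def
proof (intro allI)
  fix n k
  have "finite {p. fromT F n k (fst p) (snd p) \<noteq> 0}" using good_fromT[of F] unfolding ser_good_def by blast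
  then have fin: "finite (\<sigma> ` {p. fromT F n k (fst p) (snd p) \<noteq> 0})" by simp
  have sub: "{p. fromT F n k (fst (\<sigma> (fst p, snd p))) (snd (\<sigma> (fst p, snd p))) \<noteq> 0} \<subseteq> \<sigma> ` {p. fromT F n k (fst p) (snd p) \<noteq> 0}"
  proof
    fix p assume "p \<in> {p. fromT F n k (fst (\<sigma> (fst p, snd p))) (snd (\<sigma> (fst p, snd p))) \<noteq> 0}"
    then have "\<sigma> p \<in> {p. fromT F n k (fst p) (snd p) \<noteq> 0}" by simp
    then show "p \<in> \<sigma> ` {p. fromT F n k (fst p) (snd p) \<noteq> 0}" using invol[of p] by (metis rev_image_eqI)
  qed
  show "finite {p. fromT F n k (fst (\<sigma> (fst p, snd p))) (snd (\<sigma> (fst p, snd p))) \<noteq> 0}"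
    by (rule finite_subset[OF sub fin])
qed

lemma fromT_rmap [simp]: "fromT (rmap \<sigma> F) n k i j = fromT F n k (fst (\<sigma> (i, j))) (snd (\<sigma> (i, j)))"
  unfolding rmap_def by (simp add: fromT_toT good)

lemma rmap_add: "rmap \<sigma> (F + G) = rmap \<sigma> F + rmap \<sigma> G"
  by (rule fromT_eqI) simp

lemma rmap_diff: "rmap \<sigma> (F - G) = rmap \<sigma> F - rmap \<sigma> G"
  by (rule fromT_eqI) simp

lemma rmap_one: "rmap \<sigma> 1 = 1"
proof (rule fromT_eqI)
  fix n k i j
  have "\<sigma> (i, j) = (0, 0) \<longleftrightarrow> (i, j) = (0, 0)" using zero invol by metis
  then show "fromT (rmap \<sigma> 1) n k i j = fromT 1 n k i j" by (simp add: prod_eq_iff)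
qed

lemma rmap_rmap: "rmap \<sigma> (rmap \<sigma> F) = F"
  by (rule fromT_eqI) (simp add: invol)

lemma reidx: "(\<Sum>q\<in>{q. g (\<sigma> q) \<noteq> 0}. f (\<sigma> q)) = (\<Sum>p\<in>{p. g p \<noteq> (0::'b::zero)}. (f p :: 'c::comm_monoid_add))"
proof -
  have e: "{q. g (\<sigma> q) \<noteq> 0} = \<sigma> ` {p. g p \<noteq> 0}"
  proof
    show "{q. g (\<sigma> q) \<noteq> 0} \<subseteq> \<sigma> ` {p. g p \<noteq> 0}"
    proof
      fix q assume "q \<in> {q. g (\<sigma> q) \<noteq> 0}"
      then have "\<sigma> q \<in> {p. g p \<noteq> 0}" by simp
      then show "q \<in> \<sigma> ` {p. g p \<noteq> 0}" using invol[of q] by (metis rev_image_eqI)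
    qed
    show "\<sigma> ` {p. g p \<noteq> 0} \<subseteq> {q. g (\<sigma> q) \<noteq> 0}" using invol by auto
  qed
  show ?thesis unfolding e by (subst sum.reindex) (auto intro: inj_on_subset[OF inj] simp: invol)
qed

lemma rmap_mult: "rmap \<sigma> (F * G) = rmap \<sigma> F * rmap \<sigma> G"
proof (rule fromT_eqI)
  fix n k i j
  define a where "a = fst (\<sigma> (i, j))"
  define b where "b = snd (\<sigma> (i, j))"
  have "fromT (rmap \<sigma> F * rmap \<sigma> G) n k i j = (\<Sum>n1\<le>n. \<Sum>k1\<le>k.
      \<Sum>q\<in>{q. fromT F n1 k1 (fst (\<sigma> q)) (snd (\<sigma> q)) \<noteq> 0}.
        fromT F n1 k1 (fst (\<sigma> q)) (snd (\<sigma> q)) * fromT G (n - n1) (k - k1) (a - fst (\<sigma> q)) (b - snd (\<sigma> q)))"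
    unfolding fromT_mult' ser_mult_def by (simp add: lin a_def b_def)
  also have "\<dots> = (\<Sum>n1\<le>n. \<Sum>k1\<le>k.
      \<Sum>p\<in>{p. fromT F n1 k1 (fst p) (snd p) \<noteq> 0}.
        fromT F n1 k1 (fst p) (snd p) * fromT G (n - n1) (k - k1) (a - fst p) (b - snd p))"
    apply (intro sum.cong[OF refl])
    subgoal for n1 k1
      using reidx[of "\<lambda>p. fromT F n1 k1 (fst p) (snd p) * fromT G (n - n1) (k - k1) (a - fst p) (b - snd p)"
          "\<lambda>p. fromT F n1 k1 (fst p) (snd p)"] by simp
    done
  also have "\<dots> = fromT (rmap \<sigma> (F * G)) n k i j"
    unfolding fromT_rmap fromT_mult' ser_mult_def a_def b_def by (rule refl)
  finally show "fromT (rmap \<sigma> (F * G)) n k i j = fromT (rmap \<sigma> F * rmap \<sigma> G) n k i j" by simp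
qed

lemma rmap_power: "rmap \<sigma> (F ^ m) = rmap \<sigma> F ^ m"
  by (induction m) (simp_all add: rmap_one rmap_mult)

end

definition xneg :: "int \<times> int \<Rightarrow> int \<times> int" where "xneg p = (- fst p, snd p)"
definition yneg :: "int \<times> int \<Rightarrow> int \<times> int" where "yneg p = (fst p, - snd p)"

interpretation xr: refl_map xneg
  by unfold_locales (simp_all add: xneg_def)

interpretation yr: refl_map yneg
  by unfold_locales (simp_all add: yneg_def)

lemma fromT_xbar [simp]: "fromT (rmap xneg F) n k i j = fromT F n k (- i) j"
  by (simp add: xneg_def)

lemma fromT_ybar [simp]: "fromT (rmap yneg F) n k i j = fromT F n k i (- j)"
  by (simp add: yneg_def)


lemma ser_mult_T: "ser_good f \<Longrightarrow> ser_good g \<Longrightarrow> ser_mult f g = fromT (toT f * toT g)"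
  by (simp add: fromT_mult fromT_toT)

lemma ser_diff_T: "ser_good f \<Longrightarrow> ser_good g \<Longrightarrow> ser_diff f g = fromT (toT f - toT g)"
  by (intro ext) (simp add: ser_diff_def fromT_toT)

lemma ser_one_T: "ser_one = fromT 1"
  by (intro ext) (simp add: ser_one_def)

lemma ser_scale4_T: assumes "ser_good f" shows "ser_scale 4 f = fromT (toT f + toT f + toT f + toT f)"
proof (intro ext)
  fix n k i j
  show "ser_scale 4 f n k i j = fromT (toT f + toT f + toT f + toT f) n k i j"
    by (simp only: ser_scale_def fromT_add fromT_toT'[OF assms])
qed

lemma good_one: "ser_good ser_one"
  by (simp add: ser_one_T)

lemma good_diff: "ser_good f \<Longrightarrow> ser_good g \<Longrightarrow> ser_good (ser_diff f g)"
  by (simp add: ser_diff_T)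

lemma good_mult: "ser_good f \<Longrightarrow> ser_good g \<Longrightarrow> ser_good (ser_mult f g)"
  by (simp add: ser_mult_T)

locale walkA =
  fixes A :: "(int \<times> int) set"
  assumes finA: "finite A"
    and symA: "\<And>i j. (i, j) \<in> A \<Longrightarrow> (i, - j) \<in> A"
    and smallA: "\<And>i j. (i, j) \<in> A \<Longrightarrow> \<bar>j\<bar> \<le> 1"
    and revA: "\<And>i j. (i, j) \<in> A \<Longrightarrow> (- i, - j) \<in> A"
begin

lemma good_tA0: "ser_good (tA0 A)"
  unfolding ser_good_def
proof (intro allI)
  fix n k
  have "{p. tA0 A n k (fst p) (snd p) \<noteq> 0} \<subseteq> A" by (auto simp: tA0_def split: if_splits)
  then show "finite {p. tA0 A n k (fst p) (snd p) \<noteq> 0}" using finA by (rule finite_subset)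
qed

lemma good_tA1: "ser_good (tA1 A)"
  unfolding ser_good_def
proof (intro allI)
  fix n k
  have "{p. tA1 A n k (fst p) (snd p) \<noteq> 0} \<subseteq> (\<lambda>p. (fst p, 0)) ` A"
  proof
    fix p :: "int \<times> int" assume "p \<in> {p. tA1 A n k (fst p) (snd p) \<noteq> 0}"
    then have "(fst p, 1) \<in> A" "p = (\<lambda>p. (fst p, 0)) (fst p, 1)" by (auto simp: tA1_def prod_eq_iff split: if_splits)
    then show "p \<in> (\<lambda>p. (fst p, 0)) ` A" by (rule rev_image_eqI)
  qed
  moreover have "finite ((\<lambda>p. (fst p, 0::int)) ` A)" using finA by simp
  ultimately show "finite {p. tA1 A n k (fst p) (snd p) \<noteq> 0}" by (rule finite_subset)
qed

definition "aT = toT (tA0 A)"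
definition "bT = toT (tA1 A)"
definition "yyT = toT y_plus_ybar"
definition "stepT = aT + yyT * bT"
definition "KT = 1 - stepT"
definition "UT = inv1 KT"
definition "deltaT = (1 - aT) * (1 - aT) - (bT * bT + bT * bT + bT * bT + bT * bT)"

lemma fromT_aT [simp]: "fromT aT n k i j = (if n = 1 \<and> k = 0 \<and> j = 0 \<and> (i, 0) \<in> A then 1 else 0)"
  unfolding aT_def by (simp add: fromT_toT good_tA0 tA0_def)

lemma fromT_bT [simp]: "fromT bT n k i j = (if n = 1 \<and> k = 0 \<and> j = 0 \<and> (i, 1) \<in> A then 1 else 0)"
  unfolding bT_def by (simp add: fromT_toT good_tA1 tA1_def)

lemma memA_cases: "(i, j) \<in> A \<longleftrightarrow> (j = 0 \<and> (i, 0) \<in> A) \<or> (j = 1 \<and> (i, 1) \<in> A) \<or> (j = -1 \<and> (i, 1) \<in> A)"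
proof
  assume a: "(i, j) \<in> A"
  then have "\<bar>j\<bar> \<le> 1" by (rule smallA)
  then have "j = 0 \<or> j = 1 \<or> j = -1" by auto
  then show "(j = 0 \<and> (i, 0) \<in> A) \<or> (j = 1 \<and> (i, 1) \<in> A) \<or> (j = -1 \<and> (i, 1) \<in> A)"
    using a symA[of i j] by auto
next
  assume "(j = 0 \<and> (i, 0) \<in> A) \<or> (j = 1 \<and> (i, 1) \<in> A) \<or> (j = -1 \<and> (i, 1) \<in> A)"
  then show "(i, j) \<in> A" using symA[of i 1] by auto
qed

lemma fromT_stepT: "fromT stepT n k i j = (if n = 1 \<and> k = 0 \<and> (i, j) \<in> A then 1 else 0)"
proof -
  have "fromT stepT n k i j = fromT aT n k i j + (fromT bT n k i (j - 1) + fromT bT n k i (j + 1))"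
    unfolding stepT_def yyT_def by (simp add: fromT_yy_mult)
  then show ?thesis by (simp only: memA_cases[of i j]) auto
qed

lemma fromT_stepT_mult: "fromT (stepT * G) n k i j =
    (if 1 \<le> n then (\<Sum>p\<in>A. fromT G (n - 1) k (i - fst p) (j - snd p)) else 0)"
proof -
  have "fromT (stepT * G) n k i j = (if 1 \<le> n \<and> 0 \<le> k then
      (\<Sum>p\<in>A. fromT stepT 1 0 (fst p) (snd p) * fromT G (n - 1) (k - 0) (i - fst p) (j - snd p)) else 0)"
    by (rule mult_single_nk) (use finA in \<open>simp_all add: fromT_stepT split: if_splits\<close>)
  then show ?thesis by (simp add: fromT_stepT)
qed

lemma stepT_nth0: "fromT stepT 0 k i j = 0"
  by (simp add: fromT_stepT)

lemma K_ser_eq: "K_ser A = fromT KT"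
proof -
  have "K_ser A = fromT (1 - aT - yyT * bT)"
    unfolding K_ser_def aT_def bT_def yyT_def
    by (simp add: ser_diff_T ser_mult_T ser_one_T good_tA0 good_tA1 good_yy good_diff good_one good_mult fromT_toT)
  then show ?thesis unfolding KT_def stepT_def by (simp add: algebra_simps)
qed

lemma delta_eq: "delta_ser A = fromT deltaT"
  unfolding delta_ser_def deltaT_def aT_def bT_def
  by (simp add: ser_diff_T ser_mult_T ser_one_T ser_scale4_T good_tA0 good_tA1 good_diff good_one good_mult fromT_toT)

lemma KT0: "KT $ 0 = 1"
  by (rule nth0_one) (rule coneI, simp add: KT_def fromT_stepT split: if_splits)

lemma KU: "KT * UT = 1"
  unfolding UT_def by (rule inv1[OF KT0])

lemma U_eq: "UT = 1 + stepT * UT"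
  using KU unfolding KT_def by (simp add: algebra_simps)

lemma U_cone: "cone (\<lambda>n k i j. k = 0 \<and> \<bar>j\<bar> \<le> int n) UT"
proof (rule cone_fix[OF U_eq])
  show "cone (\<lambda>n k i j. k = 0 \<and> \<bar>j\<bar> \<le> int n) 1" by (rule cone_one) simp
  show "cone (\<lambda>n k i j. k = 0 \<and> \<bar>j\<bar> \<le> int n) stepT"
    by (rule coneI) (auto simp: fromT_stepT smallA split: if_splits)
  show "fromT stepT 0 k i j = 0" for k i j by (rule stepT_nth0)
  show "(k1::nat) = 0 \<and> \<bar>j1::int\<bar> \<le> int n1 \<Longrightarrow> (k2::nat) = 0 \<and> \<bar>j2::int\<bar> \<le> int n2 \<Longrightarrow> k1 + k2 = 0 \<and> \<bar>j1 + j2\<bar> \<le> int (n1 + n2)"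
    for n1 k1 i1 j1 n2 k2 i2 j2 by auto
qed

lemma U0_cone: "cone (\<lambda>n k i j. 1 \<le> n) (UT - 1)"
proof -
  have "UT - 1 = stepT * UT" using U_eq by (simp add: algebra_simps)
  moreover have "cone (\<lambda>n k i j. 1 \<le> n) (stepT * UT)"
  proof (rule cone_mult[of "\<lambda>n k i j. 1 \<le> n" _ "\<lambda>n k i j. True"])
    show "cone (\<lambda>n k i j. 1 \<le> n) stepT" by (rule coneI) (simp add: fromT_stepT split: if_splits)
  qed (auto simp: cone_def)
  ultimately show ?thesis by simp
qed

lemma U_nth0: "UT $ 0 = 1"
  by (rule nth0_one[OF U0_cone])

lemma symA_iff: "(i, - j) \<in> A \<longleftrightarrow> (i, j) \<in> A"
  using symA[of i j] symA[of i "- j"] by auto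

lemma revA0_iff: "(- i, 0) \<in> A \<longleftrightarrow> (i, 0) \<in> A"
  using revA[of i 0] revA[of "- i" 0] by auto

lemma revA1_iff: "(- i, 1) \<in> A \<longleftrightarrow> (i, 1) \<in> A"
proof
  assume "(- i, 1) \<in> A" then have "(i, -1) \<in> A" using revA[of "- i" 1] by simp
  then show "(i, 1) \<in> A" using symA[of i "-1"] by simp
next
  assume "(i, 1) \<in> A" then have "(- i, -1) \<in> A" using revA[of i 1] by simp
  then show "(- i, 1) \<in> A" using symA[of "- i" "-1"] by simp
qed

lemma ybar_stepT: "rmap yneg stepT = stepT"
  by (rule fromT_eqI) (simp only: fromT_ybar fromT_stepT symA_iff)

lemma ybar_U: "rmap yneg UT = UT"
proof -
  have "KT * rmap yneg UT = 1"
  proof -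
    have "rmap yneg KT = KT" unfolding KT_def by (simp add: yr.rmap_diff yr.rmap_one ybar_stepT)
    then have "KT * rmap yneg UT = rmap yneg (KT * UT)" by (simp add: yr.rmap_mult)
    then show ?thesis by (simp add: KU yr.rmap_one)
  qed
  then show ?thesis using KU inv_unique by blast
qed

lemma xbar_aT: "rmap xneg aT = aT"
  by (rule fromT_eqI) (simp only: fromT_xbar fromT_aT revA0_iff)

lemma xbar_bT: "rmap xneg bT = bT"
  by (rule fromT_eqI) (simp only: fromT_xbar fromT_bT revA1_iff)

lemma xbar_delta: "rmap xneg deltaT = deltaT"
  unfolding deltaT_def by (simp only: xr.rmap_diff xr.rmap_add xr.rmap_mult xr.rmap_one xbar_aT xbar_bT)

lemma cone_aT: "cone (\<lambda>n k i j. 1 \<le> n \<and> k = 0 \<and> j = 0) aT"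
  by (rule coneI) (simp split: if_splits)

lemma cone_bT: "cone (\<lambda>n k i j. 1 \<le> n \<and> k = 0 \<and> j = 0) bT"
  by (rule coneI) (simp split: if_splits)

end


definition Ord :: "nat \<Rightarrow> nat \<Rightarrow> nat \<Rightarrow> int \<Rightarrow> int \<Rightarrow> bool" where "Ord p n k i j \<longleftrightarrow> p \<le> n"

lemma cone_Ord_mult: assumes "cone (Ord p) F" "cone (Ord q) G" shows "cone (Ord (p + q)) (F * G)"
  by (rule cone_mult[OF assms]) (simp add: Ord_def)

lemma cone_Ord0: "cone (Ord 0) F"
  by (simp add: cone_def Ord_def)

lemma cone_Ord_mono: assumes "cone (Ord p) F" "q \<le> p" shows "cone (Ord q) F"
  by (rule cone_mono[OF assms(1)]) (use assms(2) in \<open>simp add: Ord_def\<close>)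

context walkA
begin

definition "uu m = Ym (int m) UT"

lemma Ym_neg: "Ym (- m) UT = Ym m UT"
proof (rule fromT_eqI)
  fix n k i j
  have "fromT UT n k i (- m) = fromT UT n k i m"
    using fromT_ybar[of UT n k i m] ybar_U by simp
  then show "fromT (Ym (- m) UT) n k i j = fromT (Ym m UT) n k i j" by simp
qed

lemma yfree_aT: "cone (\<lambda>n k i j. j = 0) aT"
  by (rule cone_mono[OF cone_aT]) simp

lemma yfree_bT: "cone (\<lambda>n k i j. j = 0) bT"
  by (rule cone_mono[OF cone_bT]) simp

lemma KU_expand: "KT * UT = UT - aT * UT - bT * (yyT * UT)"
  unfolding KT_def stepT_def by (simp add: algebra_simps)

lemma rec_int: "Ym m UT - aT * Ym m UT - bT * (Ym (m - 1) UT + Ym (m + 1) UT) = (if m = 0 then 1 else 0)"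
proof -
  have "Ym m (KT * UT) = Ym m 1" by (simp add: KU)
  also have "Ym m 1 = (if m = 0 then 1 else 0)" by (rule Ym_one)
  finally have "Ym m (UT - aT * UT - bT * (yyT * UT)) = (if m = 0 then 1 else 0)" by (simp add: KU_expand)
  then show ?thesis
    by (simp add: Ym_diff Ym_mult[OF yfree_aT] Ym_mult[OF yfree_bT] Ym_yy yyT_def)
qed

lemma rec_suc: "(1 - aT) * uu (Suc m) = bT * (uu m + uu (Suc (Suc m)))"
proof -
  have "Ym (int (Suc m)) UT - aT * Ym (int (Suc m)) UT - bT * (Ym (int (Suc m) - 1) UT + Ym (int (Suc m) + 1) UT) = 0"
    using rec_int[of "int (Suc m)"] by simp
  moreover have "int (Suc m) - 1 = int m" "int (Suc m) + 1 = int (Suc (Suc m))" by simp_all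
  ultimately have "uu (Suc m) - aT * uu (Suc m) - bT * (uu m + uu (Suc (Suc m))) = 0"
    unfolding uu_def by simp
  then show ?thesis by (simp add: algebra_simps)
qed

lemma rec_zero: "(1 - aT) * uu 0 - 2 * bT * uu 1 = 1"
proof -
  have "Ym 0 UT - aT * Ym 0 UT - bT * (Ym (- 1) UT + Ym 1 UT) = 1"
    using rec_int[of 0] by simp
  then have "uu 0 - aT * uu 0 - bT * (uu 1 + uu 1) = 1"
    unfolding uu_def by (simp add: Ym_neg)
  then show ?thesis by (simp add: algebra_simps)
qed

definition "II m = bT * uu m * uu m + bT * uu (Suc m) * uu (Suc m) - (1 - aT) * uu m * uu (Suc m)"

lemma II_step: "II (Suc m) = II m"
proof -
  have r: "(1 - aT) * uu (Suc m) = bT * (uu m + uu (Suc (Suc m)))" by (rule rec_suc)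
  have "II (Suc m) = bT * uu (Suc m) * uu (Suc m) + bT * uu (Suc (Suc m)) * uu (Suc (Suc m))
      - ((1 - aT) * uu (Suc m)) * uu (Suc (Suc m))"
    unfolding II_def by (simp add: algebra_simps)
  also have "\<dots> = bT * uu (Suc m) * uu (Suc m) - bT * uu m * uu (Suc (Suc m))"
    unfolding r by (simp add: algebra_simps)
  finally have 1: "II (Suc m) = bT * uu (Suc m) * uu (Suc m) - bT * uu m * uu (Suc (Suc m))" .
  have "II m = bT * uu m * uu m + bT * uu (Suc m) * uu (Suc m) - uu m * ((1 - aT) * uu (Suc m))"
    unfolding II_def by (simp add: algebra_simps)
  also have "\<dots> = bT * uu (Suc m) * uu (Suc m) - bT * uu m * uu (Suc (Suc m))"
    unfolding r by (simp add: algebra_simps)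
  finally show ?thesis using 1 by simp
qed

lemma II_const: "II m = II 0"
  by (induction m) (simp_all add: II_step)

lemma cone_uu: "cone (Ord m) (uu m)"
proof (rule coneI)
  fix n k i j assume "fromT (uu m) n k i j \<noteq> 0"
  then have "fromT UT n k i (int m) \<noteq> 0" unfolding uu_def by (simp split: if_splits)
  then have "\<bar>int m\<bar> \<le> int n" using coneD[OF U_cone] by blast
  then show "Ord m n k i j" by (simp add: Ord_def)
qed

lemma cone_bT_Ord: "cone (Ord 1) bT"
  by (rule cone_mono[OF cone_bT]) (simp add: Ord_def)

lemma cone_II: "cone (Ord (Suc m)) (II m)"
proof -
  have c1: "cone (Ord (Suc m)) (bT * uu m * uu m)"
  proof -
    have "cone (Ord (1 + m + m)) (bT * uu m * uu m)"
      by (intro cone_Ord_mult cone_bT_Ord cone_uu)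
    then show ?thesis by (rule cone_Ord_mono) simp
  qed
  have c2: "cone (Ord (Suc m)) (bT * uu (Suc m) * uu (Suc m))"
  proof -
    have "cone (Ord (1 + Suc m + Suc m)) (bT * uu (Suc m) * uu (Suc m))"
      by (intro cone_Ord_mult cone_bT_Ord cone_uu)
    then show ?thesis by (rule cone_Ord_mono) simp
  qed
  have c3: "cone (Ord (Suc m)) ((1 - aT) * uu m * uu (Suc m))"
  proof -
    have "cone (Ord (0 + m + Suc m)) ((1 - aT) * uu m * uu (Suc m))"
      by (intro cone_Ord_mult cone_Ord0 cone_uu)
    then show ?thesis by (rule cone_Ord_mono) simp
  qed
  show ?thesis unfolding II_def by (intro cone_diff cone_add c1 c2 c3)
qed

lemma II_zero: "II 0 = 0"
proof (rule fromT_eqI)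
  fix n k i j
  have "fromT (II n) n k i j = 0" by (rule coneD'[OF cone_II]) (simp add: Ord_def)
  then show "fromT (II 0) n k i j = fromT 0 n k i j" using II_const[of n] by simp
qed

lemma c_delta: "uu 0 * uu 0 * deltaT = 1"
proof -
  define c where "c = uu 0"
  define v where "v = uu 1"
  define a' where "a' = 1 - aT"
  have r: "a' * c - 2 * bT * v = 1" using rec_zero unfolding c_def v_def a'_def by simp
  have i: "bT * c * c + bT * v * v - a' * c * v = 0" using II_zero unfolding II_def c_def v_def a'_def by simp
  have d: "deltaT = a' * a' - 4 * bT * bT" unfolding deltaT_def a'_def by (simp add: algebra_simps)
  have id: "4 * bT * (bT * c * c + bT * v * v - a' * c * v) + (c * c * (a' * a' - 4 * bT * bT) - 1)
      = (2 * bT * v - a' * c) * (2 * bT * v - a' * c) - 1"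
    by (simp add: algebra_simps)
  have "2 * bT * v - a' * c = -1" using r by (simp add: algebra_simps)
  then have "c * c * (a' * a' - 4 * bT * bT) - 1 = 0" using id i by simp
  then show ?thesis unfolding d[symmetric] c_def by simp
qed

lemma uu0_nth0: "uu 0 $ 0 = 1"
proof -
  have "UT $ 0 = 1" by (rule U_nth0)
  then have "fromT UT 0 k i j = fromT 1 0 k i j" for k i j using nth_eqD[of UT 0 1] by simp
  then have "fromT (uu 0) 0 k i j = fromT 1 0 k i j" for k i j unfolding uu_def by simp
  then have "uu 0 $ 0 = (1::T) $ 0" by (rule nth_eqI)
  then show ?thesis by simp
qed

lemma yfree_uu: "cone (\<lambda>n k i j. j = 0) (uu m)"
  unfolding uu_def by (rule cone_Ym)

end


lemma rec_exists:
  fixes \<Phi> :: "(nat \<Rightarrow> 'a) \<Rightarrow> nat \<Rightarrow> 'a"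
  assumes loc: "\<And>f g n. (\<And>m. m < n \<Longrightarrow> f m = g m) \<Longrightarrow> \<Phi> f n = \<Phi> g n"
  shows "\<exists>f. \<forall>n. f n = \<Phi> f n"
proof -
  have adm: "adm_wf less_than \<Phi>"
    unfolding adm_wf_def less_than_iff by (blast intro: loc)
  have eq: "wfrec less_than \<Phi> = \<Phi> (wfrec less_than \<Phi>)"
    by (rule wfrec_fixpoint[OF wf_less_than adm])
  show ?thesis
  proof (intro exI allI)
    fix n show "wfrec less_than \<Phi> n = \<Phi> (wfrec less_than \<Phi>) n" using fun_cong[OF eq, of n] .
  qed
qed

definition trunc :: "T \<Rightarrow> nat \<Rightarrow> T" where
  "trunc F n = Abs_fps (\<lambda>i. if i < n then F $ i else 0)"

definition agr :: "nat \<Rightarrow> T \<Rightarrow> T \<Rightarrow> bool" where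
  "agr n F G \<longleftrightarrow> (\<forall>i\<le>n. F $ i = G $ i)"

lemma agr_mult:
  assumes "agr n F F'" "agr n G G'" shows "agr n (F * G) (F' * G')"
  unfolding agr_def
proof (intro allI impI)
  fix i assume i: "i \<le> n"
  show "(F * G) $ i = (F' * G') $ i"
    unfolding fps_mult_nth
  proof (rule sum.cong[OF refl])
    fix j assume "j \<in> {0..i}"
    then have "j \<le> n" "i - j \<le> n" using i by auto
    then show "F $ j * G $ (i - j) = F' $ j * G' $ (i - j)" using assms unfolding agr_def by simp
  qed
qed

lemma agr_refl: "agr n F F"
  by (simp add: agr_def)

lemma agr_expand:
  assumes "1 \<le> n" shows "agr n F (trunc F n + fps_const (F $ n) * fps_X ^ n)"
  unfolding agr_def trunc_def by (auto simp: fps_X_power_mult_right_nth mult.commute[of "fps_const _"])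

lemma fromT_trunc [simp]: "fromT (trunc F n) m k i j = (if m < n then fromT F m k i j else 0)"
  by (simp add: trunc_def fromT_def)

lemma cone_trunc: "cone C F \<Longrightarrow> cone C (trunc F n)"
  unfolding cone_def by simp

lemma trunc_nth0: "1 \<le> n \<Longrightarrow> trunc F n $ 0 = F $ 0"
  by (simp add: trunc_def)

lemma square_expand:
  fixes dT sT sbT :: T and a b c :: "L fps"
  assumes n: "1 \<le> n" and d0: "dT $ 0 = 1" and s0: "sT $ 0 = 1" and sb0: "sbT $ 0 = 1"
  defines "Q \<equiv> (dT + fps_const a * fps_X ^ n) * (sT + fps_const b * fps_X ^ n) * (sbT + fps_const c * fps_X ^ n)"
  shows "(Q * Q) $ n = ((dT * sT * sbT) * (dT * sT * sbT)) $ n + 2 * (a + b + c)"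
proof -
  define x :: T where "x = fps_X ^ n"
  define wT where "wT = dT * sT * sbT"
  define R1 where "R1 = fps_const a * sT * sbT + fps_const b * dT * sbT + fps_const c * dT * sT"
  define R2 where "R2 = fps_const a * fps_const b * sbT + fps_const a * fps_const c * sT + fps_const b * fps_const c * dT
     + x * fps_const a * fps_const b * fps_const c"
  have Qe: "Q = wT + x * R1 + x * x * R2"
    unfolding Q_def wT_def R1_def R2_def x_def[symmetric] by (simp add: algebra_simps)
  have QQ: "Q * Q = wT * wT + x * (2 * wT * R1) + x * (x * (R1 * R1 + 2 * wT * R2 + 2 * x * R1 * R2 + x * x * R2 * R2))"
    unfolding Qe by (simp add: algebra_simps)
  have e1: "(x * H) $ n = H $ 0" for H unfolding x_def by (simp add: fps_X_power_mult_nth)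
  have e2: "(x * H) $ 0 = 0" for H unfolding x_def using n by (simp add: fps_X_power_mult_nth)
  have "(Q * Q) $ n = (wT * wT) $ n + (2 * wT * R1) $ 0"
    by (simp only: QQ fps_add_nth e1 e2) simp
  also have "(2 * wT * R1) $ 0 = 2 * (a + b + c)"
    unfolding wT_def R1_def using d0 s0 sb0 by (simp add: algebra_simps)
  finally show ?thesis unfolding wT_def .
qed

definition halfT :: T where "halfT = monoT 0 0 0 0 (1/2)"

lemma halfT: "halfT + halfT = 1"
  by (rule fromT_eqI) (simp only: fromT_add halfT_def fromT_mono fromT_one, simp)

lemma cone_halfT: "cone (\<lambda>n k i j. k = 0 \<and> j = 0) halfT"
  by (rule coneI) (simp add: halfT_def split: if_splits)

definition "C0 n k i j \<longleftrightarrow> 1 \<le> n \<and> k = 0 \<and> j = 0 \<and> i = (0::int)"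
definition "Cp n k i j \<longleftrightarrow> 1 \<le> n \<and> k = 0 \<and> j = 0 \<and> 0 < (i::int)"
definition "Cn n k i j \<longleftrightarrow> 1 \<le> n \<and> k = 0 \<and> j = 0 \<and> i < (0::int)"
definition "Ckj (n::nat) (k::nat) (i::int) (j::int) \<longleftrightarrow> k = 0 \<and> j = 0"

lemma cone_Ckj_mult: assumes "cone Ckj F" "cone Ckj G" shows "cone Ckj (F * G)"
  by (rule cone_mult[OF assms]) (simp add: Ckj_def)

lemma cone_Ckj_one: "cone Ckj 1"
  by (rule cone_one) (simp add: Ckj_def)

lemma proj3:
  assumes "cone Ckj G"
  shows "proj (\<lambda>n k i j. k = 0 \<and> j = 0 \<and> i = 0) G + proj (\<lambda>n k i j. k = 0 \<and> j = 0 \<and> 0 < i) G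
       + proj (\<lambda>n k i j. k = 0 \<and> j = 0 \<and> i < 0) G = G"
proof (rule fromT_eqI)
  fix n k i j
  show "fromT (proj (\<lambda>n k i j. k = 0 \<and> j = 0 \<and> i = 0) G + proj (\<lambda>n k i j. k = 0 \<and> j = 0 \<and> 0 < i) G
       + proj (\<lambda>n k i j. k = 0 \<and> j = 0 \<and> i < 0) G) n k i j = fromT G n k i j"
  proof (cases "k = 0 \<and> j = 0")
    case True then show ?thesis by auto
  next
    case False then show ?thesis using coneD'[OF assms, of n k i j] by (auto simp: Ckj_def)
  qed
qed

context walkA
begin

lemma cone_aT_Ckj: "cone Ckj aT"
  by (rule cone_mono[OF cone_aT]) (simp add: Ckj_def)

lemma cone_bT_Ckj: "cone Ckj bT"
  by (rule cone_mono[OF cone_bT]) (simp add: Ckj_def)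

lemma cone_delta_Ckj: "cone Ckj deltaT"
  unfolding deltaT_def
  by (intro cone_diff cone_add cone_Ckj_mult cone_Ckj_one cone_aT_Ckj cone_bT_Ckj)

lemma delta_nth0: "deltaT $ 0 = 1"
proof (rule nth0_one)
  have a: "cone (\<lambda>n k i j. 1 \<le> n) aT" by (rule cone_mono[OF cone_aT]) simp
  have b: "cone (\<lambda>n k i j. 1 \<le> n) bT" by (rule cone_mono[OF cone_bT]) simp
  have m: "cone (\<lambda>n k i j. 1 \<le> n) (F * G)" if "cone (\<lambda>n k i j. 1 \<le> n) F" for F G
    by (rule cone_mult[OF that, of "\<lambda>n k i j. True"]) (auto simp: cone_def)
  have e: "deltaT - 1 = aT * aT - aT - aT - (bT * bT + bT * bT + bT * bT + bT * bT)"
    unfolding deltaT_def by (simp add: algebra_simps)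
  show "cone (\<lambda>n k i j. 1 \<le> n) (deltaT - 1)"
    unfolding e by (intro cone_diff cone_add m[OF a] m[OF b] a)
qed

definition "trh (h :: nat \<Rightarrow> L fps) n = Abs_fps (\<lambda>i. if i < n then h i else 0)"

definition "Gh (h :: nat \<Rightarrow> L fps \<times> L fps \<times> L fps) n =
  halfT * (deltaT - (trh (\<lambda>i. fst (h i)) n * trh (\<lambda>i. fst (snd (h i))) n * trh (\<lambda>i. snd (snd (h i))) n)
                   * (trh (\<lambda>i. fst (h i)) n * trh (\<lambda>i. fst (snd (h i))) n * trh (\<lambda>i. snd (snd (h i))) n))"

definition "Phi h n = (if n = 0 then (1, 1, 1) else
   ((proj (\<lambda>n k i j. k = 0 \<and> j = 0 \<and> i = 0) (Gh h n)) $ n,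
    (proj (\<lambda>n k i j. k = 0 \<and> j = 0 \<and> 0 < i) (Gh h n)) $ n,
    (proj (\<lambda>n k i j. k = 0 \<and> j = 0 \<and> i < 0) (Gh h n)) $ n))"

lemma trh_loc: "(\<And>m. m < n \<Longrightarrow> f m = g m) \<Longrightarrow> trh f n = trh g n"
  unfolding trh_def by (intro fps_ext) simp

lemma Phi_loc: "(\<And>m. m < n \<Longrightarrow> f m = g m) \<Longrightarrow> Phi f n = Phi g n"
proof -
  assume a: "\<And>m. m < n \<Longrightarrow> f m = g m"
  have "trh (\<lambda>i. fst (f i)) n = trh (\<lambda>i. fst (g i)) n"
       "trh (\<lambda>i. fst (snd (f i))) n = trh (\<lambda>i. fst (snd (g i))) n"
       "trh (\<lambda>i. snd (snd (f i))) n = trh (\<lambda>i. snd (snd (g i))) n"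
    by (intro trh_loc; simp add: a)+
  then have "Gh f n = Gh g n" unfolding Gh_def by simp
  then show ?thesis unfolding Phi_def by simp
qed

lemma factor_exists:
  "\<exists>d s sb. deltaT = (d * s * sb) * (d * s * sb) \<and> cone C0 (d - 1) \<and> cone Cp (s - 1) \<and> cone Cn (sb - 1)"
proof -
  obtain h where h: "\<And>n. h n = Phi h n" using rec_exists[of Phi] Phi_loc by blast
  define d where "d = Abs_fps (\<lambda>n. fst (h n))"
  define s where "s = Abs_fps (\<lambda>n. fst (snd (h n)))"
  define sb where "sb = Abs_fps (\<lambda>n. snd (snd (h n)))"
  define P0 where "P0 = proj (\<lambda>n k i j. k = 0 \<and> j = 0 \<and> i = 0)"
  define Pp where "Pp = proj (\<lambda>n k i j. k = 0 \<and> j = 0 \<and> 0 < i)"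
  define Pn where "Pn = proj (\<lambda>n k i j. k = 0 \<and> j = 0 \<and> i < 0)"
  have hn: "h n = (if n = 0 then (1,1,1) else ((P0 (Gh h n)) $ n, (Pp (Gh h n)) $ n, (Pn (Gh h n)) $ n))" for n
    using h[of n] unfolding Phi_def P0_def Pp_def Pn_def by simp
  have dn: "d $ n = (if n = 0 then 1 else (P0 (Gh h n)) $ n)" for n unfolding d_def using hn[of n] by simp
  have sn: "s $ n = (if n = 0 then 1 else (Pp (Gh h n)) $ n)" for n unfolding s_def using hn[of n] by simp
  have sbn: "sb $ n = (if n = 0 then 1 else (Pn (Gh h n)) $ n)" for n unfolding sb_def using hn[of n] by simp
  have fd: "fromT d n k i j = (if n = 0 then fromT 1 0 k i j else fromT (P0 (Gh h n)) n k i j)" for n k i j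
  proof (cases "n = 0")
    case True
    then have "d $ 0 = (1::T) $ 0" using dn[of 0] by simp
    from nth_eqD[OF this] show ?thesis using True by simp
  next
    case False
    then have "d $ n = P0 (Gh h n) $ n" using dn[of n] by simp
    from nth_eqD[OF this] show ?thesis using False by simp
  qed
  have fs: "fromT s n k i j = (if n = 0 then fromT 1 0 k i j else fromT (Pp (Gh h n)) n k i j)" for n k i j
  proof (cases "n = 0")
    case True
    then have "s $ 0 = (1::T) $ 0" using sn[of 0] by simp
    from nth_eqD[OF this] show ?thesis using True by simp
  next
    case False
    then have "s $ n = Pp (Gh h n) $ n" using sn[of n] by simp
    from nth_eqD[OF this] show ?thesis using False by simp
  qed
  have fsb: "fromT sb n k i j = (if n = 0 then fromT 1 0 k i j else fromT (Pn (Gh h n)) n k i j)" for n k i j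
  proof (cases "n = 0")
    case True
    then have "sb $ 0 = (1::T) $ 0" using sbn[of 0] by simp
    from nth_eqD[OF this] show ?thesis using True by simp
  next
    case False
    then have "sb $ n = Pn (Gh h n) $ n" using sbn[of n] by simp
    from nth_eqD[OF this] show ?thesis using False by simp
  qed
  have cd: "cone C0 (d - 1)"
    by (rule coneI) (auto simp: fd C0_def P0_def split: if_splits)
  have cs: "cone Cp (s - 1)"
    by (rule coneI) (auto simp: fs Cp_def Pp_def split: if_splits)
  have csb: "cone Cn (sb - 1)"
    by (rule coneI) (auto simp: fsb Cn_def Pn_def split: if_splits)
  have kd: "cone Ckj d" by (rule coneI) (auto simp: fd Ckj_def P0_def split: if_splits)
  have ks: "cone Ckj s" by (rule coneI) (auto simp: fs Ckj_def Pp_def split: if_splits)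
  have ksb: "cone Ckj sb" by (rule coneI) (auto simp: fsb Ckj_def Pn_def split: if_splits)
  have trd: "trh (\<lambda>i. fst (h i)) n = trunc d n" for n unfolding trh_def trunc_def d_def by (intro fps_ext) simp
  have trs: "trh (\<lambda>i. fst (snd (h i))) n = trunc s n" for n unfolding trh_def trunc_def s_def by (intro fps_ext) simp
  have trsb: "trh (\<lambda>i. snd (snd (h i))) n = trunc sb n" for n unfolding trh_def trunc_def sb_def by (intro fps_ext) simp
  define w where "w = d * s * sb"
  have "(w * w) $ n = deltaT $ n" for n
  proof (cases "n = 0")
    case True
    then show ?thesis unfolding w_def by (simp add: delta_nth0 dn sn sbn)
  next
    case False
    then have n1: "1 \<le> n" by simp
    define wT where "wT = trunc d n * trunc s n * trunc sb n"
    define G where "G = Gh h n"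
    have Gd: "G = halfT * (deltaT - wT * wT)" unfolding G_def Gh_def wT_def trd trs trsb by simp
    have cG: "cone Ckj G" unfolding Gd wT_def
      by (intro cone_Ckj_mult cone_diff cone_halfT[THEN cone_mono] cone_delta_Ckj cone_trunc kd ks ksb)
         (simp add: Ckj_def)
    have agw: "agr n w ((trunc d n + fps_const (d $ n) * fps_X ^ n) * (trunc s n + fps_const (s $ n) * fps_X ^ n)
        * (trunc sb n + fps_const (sb $ n) * fps_X ^ n))"
      unfolding w_def by (intro agr_mult agr_expand n1)
    have "(w * w) $ n = (((trunc d n + fps_const (d $ n) * fps_X ^ n) * (trunc s n + fps_const (s $ n) * fps_X ^ n)
        * (trunc sb n + fps_const (sb $ n) * fps_X ^ n)) * ((trunc d n + fps_const (d $ n) * fps_X ^ n) * (trunc s n + fps_const (s $ n) * fps_X ^ n)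
        * (trunc sb n + fps_const (sb $ n) * fps_X ^ n))) $ n"
      using agr_mult[OF agw agw] unfolding agr_def by simp
    also have "\<dots> = (wT * wT) $ n + 2 * (d $ n + s $ n + sb $ n)"
    proof -
      have "trunc d n $ 0 = 1" "trunc s n $ 0 = 1" "trunc sb n $ 0 = 1"
        using trunc_nth0[OF n1, of d] trunc_nth0[OF n1, of s] trunc_nth0[OF n1, of sb] by (simp_all add: dn sn sbn)
      then show ?thesis unfolding wT_def by (intro square_expand n1)
    qed
    also have "d $ n + s $ n + sb $ n = G $ n"
    proof -
      have "d $ n + s $ n + sb $ n = (P0 G + Pp G + Pn G) $ n" using False by (simp add: dn sn sbn G_def)
      also have "P0 G + Pp G + Pn G = G" unfolding P0_def Pp_def Pn_def by (rule proj3[OF cG])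
      finally show ?thesis .
    qed
    also have "2 * G $ n = (G + G) $ n" by (simp only: mult_2 fps_add_nth)
    also have "G + G = deltaT - wT * wT" unfolding Gd by (simp only: distrib_right[symmetric] halfT mult_1_left)
    finally show ?thesis by simp
  qed
  then have "deltaT = w * w" by (intro fps_ext) simp
  then show ?thesis using cd cs csb unfolding w_def by blast
qed

end


definition "Xnn n k i j \<longleftrightarrow> k = 0 \<and> j = 0 \<and> (0::int) \<le> i"
definition "Xnp n k i j \<longleftrightarrow> k = 0 \<and> j = 0 \<and> (i::int) \<le> 0"
definition "X0 (n::nat) (k::nat) (i::int) (j::int) \<longleftrightarrow> k = 0 \<and> j = 0 \<and> i = 0"
definition "PN (n::nat) (k::nat) (i::int) (j::int) \<longleftrightarrow> i \<le> 0"

lemma cone_1n: "cone C (F - 1) \<Longrightarrow> (\<And>n k i j. C n k i j \<Longrightarrow> 1 \<le> n) \<Longrightarrow> F $ 0 = 1"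
  by (rule nth0_one) (rule cone_mono)

lemma cone_plus1: "cone C (F - 1) \<Longrightarrow> (\<And>n k i j. C n k i j \<Longrightarrow> C' n k i j) \<Longrightarrow> C' 0 0 0 0 \<Longrightarrow> cone C' F"
proof -
  assume a: "cone C (F - 1)" "\<And>n k i j. C n k i j \<Longrightarrow> C' n k i j" "C' 0 0 0 0"
  have "cone C' (1 + (F - 1))" by (intro cone_add cone_one a(3) cone_mono[OF a(1) a(2)])
  then show ?thesis by simp
qed

lemma cone_Xnn_mult: assumes "cone Xnn F" "cone Xnn G" shows "cone Xnn (F * G)"
  by (rule cone_mult[OF assms]) (auto simp: Xnn_def)

lemma cone_Xnp_mult: assumes "cone Xnp F" "cone Xnp G" shows "cone Xnp (F * G)"
  by (rule cone_mult[OF assms]) (auto simp: Xnp_def)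

lemma cone_Xnn_inv: "cone Xnn F \<Longrightarrow> F $ 0 = 1 \<Longrightarrow> cone Xnn (inv1 F)"
  by (rule cone_inverse[OF _ _ inv1]) (auto simp: Xnn_def)

lemma cone_Xnp_inv: "cone Xnp F \<Longrightarrow> F $ 0 = 1 \<Longrightarrow> cone Xnp (inv1 F)"
  by (rule cone_inverse[OF _ _ inv1]) (auto simp: Xnp_def)

lemma UF:
  assumes eq: "D1 * P1 * N1 = D2 * P2 * N2"
    and d1: "cone C0 (D1 - 1)" and d2: "cone C0 (D2 - 1)"
    and p1: "cone Cp (P1 - 1)" and p2: "cone Cp (P2 - 1)"
    and n1: "cone Cn (N1 - 1)" and n2: "cone Cn (N2 - 1)"
  shows "D1 = D2 \<and> P1 = P2 \<and> N1 = N2"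
proof -
  have D10: "D1 $ 0 = 1" by (rule cone_1n[OF d1]) (simp add: C0_def)
  have D20: "D2 $ 0 = 1" by (rule cone_1n[OF d2]) (simp add: C0_def)
  have P10: "P1 $ 0 = 1" by (rule cone_1n[OF p1]) (simp add: Cp_def)
  have P20: "P2 $ 0 = 1" by (rule cone_1n[OF p2]) (simp add: Cp_def)
  have N10: "N1 $ 0 = 1" by (rule cone_1n[OF n1]) (simp add: Cn_def)
  have N20: "N2 $ 0 = 1" by (rule cone_1n[OF n2]) (simp add: Cn_def)
  have xd1: "cone X0 D1" by (rule cone_plus1[OF d1]) (auto simp: C0_def X0_def)
  have xd2: "cone X0 D2" by (rule cone_plus1[OF d2]) (auto simp: C0_def X0_def)
  have nd1: "cone Xnn D1" by (rule cone_plus1[OF d1]) (auto simp: C0_def Xnn_def)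
  have nd2: "cone Xnn D2" by (rule cone_plus1[OF d2]) (auto simp: C0_def Xnn_def)
  have pd2: "cone Xnp D2" by (rule cone_plus1[OF d2]) (auto simp: C0_def Xnp_def)
  have np1: "cone Xnn P1" by (rule cone_plus1[OF p1]) (auto simp: Cp_def Xnn_def)
  have np2: "cone Xnn P2" by (rule cone_plus1[OF p2]) (auto simp: Cp_def Xnn_def)
  have pn1: "cone Xnp N1" by (rule cone_plus1[OF n1]) (auto simp: Cn_def Xnp_def)
  have pn2: "cone Xnp N2" by (rule cone_plus1[OF n2]) (auto simp: Cn_def Xnp_def)
  define E1 where "E1 = D1 * P1"
  define E2 where "E2 = D2 * P2"
  have E10: "E1 $ 0 = 1" unfolding E1_def by (simp add: D10 P10)
  have E20: "E2 $ 0 = 1" unfolding E2_def by (simp add: D20 P20)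
  define I2 where "I2 = inv1 E2"
  define J1 where "J1 = inv1 N1"
  have EI: "E2 * I2 = 1" unfolding I2_def by (rule inv1[OF E20])
  have NJ: "N1 * J1 = 1" unfolding J1_def by (rule inv1[OF N10])
  have eq': "E1 * N1 = E2 * N2" using eq unfolding E1_def E2_def .
  define V where "V = E1 * I2"
  have V2: "V = N2 * J1"
  proof -
    have "E1 * I2 = E1 * I2 * (N1 * J1)" by (simp add: NJ)
    also have "\<dots> = (E1 * N1) * I2 * J1" by (simp only: ac_simps)
    also have "\<dots> = (E2 * I2) * N2 * J1" unfolding eq' by (simp only: ac_simps)
    finally show ?thesis unfolding V_def EI by simp
  qed
  have cE2: "cone Xnn E2" unfolding E2_def by (intro cone_Xnn_mult nd2 np2)
  have cV1: "cone Xnn V" unfolding V_def E1_def I2_def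
    by (intro cone_Xnn_mult nd1 np1 cone_Xnn_inv cE2 E20)
  have cV2: "cone Xnp V" unfolding V2 J1_def
    by (intro cone_Xnp_mult pn2 cone_Xnp_inv pn1 N10)
  have cV: "cone X0 V" by (rule cone_mono[OF cone_conj[OF cV1 cV2]]) (auto simp: Xnn_def Xnp_def X0_def)
  have N2V: "N2 = V + V * (N1 - 1)"
  proof -
    have "V * N1 = N2 * (N1 * J1)" unfolding V2 by (simp only: ac_simps)
    then have "V * N1 = N2" by (simp add: NJ)
    then show ?thesis by (simp add: algebra_simps)
  qed
  define P where "P = proj (\<lambda>n k i j. i = 0)"
  have Pz: "cone C F \<Longrightarrow> (\<And>n k i j. C n k i j \<Longrightarrow> i \<noteq> 0) \<Longrightarrow> P F = 0" for C F
    unfolding P_def by (rule proj_zero[of C]) auto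
  have Pid: "cone X0 F \<Longrightarrow> P F = F" for F
  proof -
    assume "cone X0 F"
    then have "cone (\<lambda>n k i j. i = 0) F" by (rule cone_mono) (simp add: X0_def)
    then show "P F = F" unfolding P_def by (rule proj_id)
  qed
  have "P N2 = 1"
  proof -
    have "P N2 = P 1 + P (N2 - 1)" unfolding proj_add[symmetric] P_def by simp
    also have "P (N2 - 1) = 0" by (rule Pz[OF n2]) (auto simp: Cn_def)
    also have "P 1 = 1" by (rule Pid, rule cone_one) (simp add: X0_def)
    finally show ?thesis by simp
  qed
  moreover have "P N2 = V"
  proof -
    have c: "cone (\<lambda>n k i j. i < 0) (V * (N1 - 1))"
      by (rule cone_mult[OF cV n1]) (auto simp: X0_def Cn_def)
    have "P N2 = P V + P (V * (N1 - 1))" unfolding P_def by (subst N2V) (simp add: proj_add)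
    also have "P (V * (N1 - 1)) = 0" by (rule Pz[OF c]) auto
    finally show ?thesis using Pid[OF cV] by simp
  qed
  ultimately have V1: "V = 1" by simp
  have NN: "N1 = N2" using N2V V1 by simp
  have EE: "E1 = E2"
  proof -
    have "E1 = E1 * (I2 * E2)" using EI by (simp add: mult.commute)
    also have "\<dots> = V * E2" unfolding V_def by (simp only: ac_simps)
    finally show ?thesis using V1 by simp
  qed
  have DD: "D1 = D2"
  proof -
    have c1: "cone (\<lambda>n k i j. 0 < i) (D1 * (P1 - 1))" by (rule cone_mult[OF xd1 p1]) (auto simp: X0_def Cp_def)
    have c2: "cone (\<lambda>n k i j. 0 < i) (D2 * (P2 - 1))" by (rule cone_mult[OF xd2 p2]) (auto simp: X0_def Cp_def)
    have e1: "E1 = D1 + D1 * (P1 - 1)" unfolding E1_def by (simp add: algebra_simps)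
    have e2: "E2 = D2 + D2 * (P2 - 1)" unfolding E2_def by (simp add: algebra_simps)
    have "P E1 = D1" unfolding e1 P_def proj_add using Pid[OF xd1] Pz[OF c1] unfolding P_def by simp
    moreover have "P E2 = D2" unfolding e2 P_def proj_add using Pid[OF xd2] Pz[OF c2] unfolding P_def by simp
    ultimately show ?thesis using EE by simp
  qed
  have "D1 \<noteq> 0" using D10 by auto
  moreover have "D1 * P1 = D1 * P2" using EE DD unfolding E1_def E2_def by simp
  ultimately have "P1 = P2" by simp
  then show ?thesis using DD NN by simp
qed


context walkA
begin

definition "fac = (SOME t. deltaT = (fst t * fst (snd t) * snd (snd t)) * (fst t * fst (snd t) * snd (snd t))
   \<and> cone C0 (fst t - 1) \<and> cone Cp (fst (snd t) - 1) \<and> cone Cn (snd (snd t) - 1))"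
definition "dd = fst fac"
definition "ss = fst (snd fac)"
definition "ssb = snd (snd fac)"
definition "ww = dd * ss * ssb"

lemma fac: "deltaT = ww * ww" "cone C0 (dd - 1)" "cone Cp (ss - 1)" "cone Cn (ssb - 1)"
proof -
  obtain d s sb where "deltaT = (d * s * sb) * (d * s * sb) \<and> cone C0 (d - 1) \<and> cone Cp (s - 1) \<and> cone Cn (sb - 1)"
    using factor_exists by blast
  then have "\<exists>t. deltaT = (fst t * fst (snd t) * snd (snd t)) * (fst t * fst (snd t) * snd (snd t))
   \<and> cone C0 (fst t - 1) \<and> cone Cp (fst (snd t) - 1) \<and> cone Cn (snd (snd t) - 1)"
    by (intro exI[of _ "(d, s, sb)"]) simp
  from someI_ex[OF this] have "deltaT = ww * ww \<and> cone C0 (dd - 1) \<and> cone Cp (ss - 1) \<and> cone Cn (ssb - 1)"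
    unfolding ww_def dd_def ss_def ssb_def fac_def[symmetric] .
  then show "deltaT = ww * ww" "cone C0 (dd - 1)" "cone Cp (ss - 1)" "cone Cn (ssb - 1)" by blast+
qed

lemma dd0: "dd $ 0 = 1" by (rule cone_1n[OF fac(2)]) (simp add: C0_def)
lemma ss0: "ss $ 0 = 1" by (rule cone_1n[OF fac(3)]) (simp add: Cp_def)
lemma ssb0: "ssb $ 0 = 1" by (rule cone_1n[OF fac(4)]) (simp add: Cn_def)
lemma ww0: "ww $ 0 = 1" unfolding ww_def by (simp add: dd0 ss0 ssb0)

lemma one_neq_minus_one_nth0: "(F::T) $ 0 = 1 \<Longrightarrow> F \<noteq> - 1"
proof
  assume a: "F $ 0 = 1" "F = - 1"
  have "F $ 0 = (1::T) $ 0" using a(1) by simp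
  from nth_eqD[OF this, of 0 0 0] have "fromT F 0 0 0 0 = 1" by simp
  moreover have "fromT F 0 0 0 0 = -1" using a(2) by simp
  ultimately show False by simp
qed

lemma sq1: "(X :: T) * X = 1 \<Longrightarrow> X $ 0 = 1 \<Longrightarrow> X = 1"
  using one_neq_minus_one_nth0 square_eq_1_iff by blast

lemma sq_eq: "(X :: T) * X = Y * Y \<Longrightarrow> X $ 0 = 1 \<Longrightarrow> Y $ 0 = 1 \<Longrightarrow> X = Y"
proof -
  assume a: "X * X = Y * Y" "X $ 0 = 1" "Y $ 0 = 1"
  have "(X - Y) * (X + Y) = 0" using a(1) by (simp add: algebra_simps)
  moreover have "X + Y \<noteq> 0"
  proof
    assume "X + Y = 0"
    then have "(X + Y) $ 0 = 0" by simp
    then have "(1::L fps) + 1 = 0" using a(2,3) by simp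
    then have "fromT (1 + 1) 0 0 0 0 = fromT 0 0 0 0 0"
      using nth_eqD[of "1 + 1" 0 0] by simp
    moreover have "fromT (1 + 1) 0 0 0 0 = 2" by (simp only: fromT_add fromT_one) simp
    ultimately show False by simp
  qed
  ultimately show "X = Y" by simp
qed

lemma c_w: "uu 0 * ww = 1"
proof (rule sq1)
  show "uu 0 * ww * (uu 0 * ww) = 1" using c_delta fac(1) by (simp add: ac_simps)
  show "(uu 0 * ww) $ 0 = 1" by (simp add: uu0_nth0 ww0)
qed

lemma xbar_dd: "rmap xneg dd = dd"
proof -
  have c: "cone X0 dd" by (rule cone_plus1[OF fac(2)]) (auto simp: C0_def X0_def)
  show ?thesis
  proof (rule fromT_eqI)
    fix n k i j
    show "fromT (rmap xneg dd) n k i j = fromT dd n k i j"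
    proof (cases "i = 0")
      case False
      then show ?thesis using coneD'[OF c, of n k i j] coneD'[OF c, of n k "- i" j] by (simp add: X0_def xneg_def)
    qed (simp add: xneg_def)
  qed
qed

lemma ssb_xbar: "ssb = rmap xneg ss"
proof -
  have w: "rmap xneg ww = ww"
  proof (rule sq_eq)
    show "rmap xneg ww * rmap xneg ww = ww * ww"
      using xbar_delta fac(1) by (simp only: xr.rmap_mult[symmetric])
    show "ww $ 0 = 1" by (rule ww0)
    have "fromT (rmap xneg ww) 0 k i j = fromT 1 0 k i j" for k i j
      using nth_eqD[of ww 0 1 k "- i" j] ww0 by (simp add: xneg_def)
    then have "rmap xneg ww $ 0 = (1::T) $ 0" by (rule nth_eqI)
    then show "rmap xneg ww $ 0 = 1" by simp
  qed
  have e: "dd * ss * ssb = dd * rmap xneg ssb * rmap xneg ss"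
  proof -
    have "dd * ss * ssb = rmap xneg ww" using w unfolding ww_def by simp
    also have "\<dots> = dd * rmap xneg ss * rmap xneg ssb" unfolding ww_def by (simp only: xr.rmap_mult xbar_dd)
    finally show ?thesis by (simp add: ac_simps)
  qed
  have c1: "cone Cp (rmap xneg ssb - 1)"
  proof -
    have "rmap xneg ssb - 1 = rmap xneg (ssb - 1)" by (simp only: xr.rmap_diff xr.rmap_one)
    moreover have "cone Cp (rmap xneg (ssb - 1))"
    proof (rule coneI)
      fix n k i j assume "fromT (rmap xneg (ssb - 1)) n k i j \<noteq> 0"
      then have "fromT (ssb - 1) n k (- i) j \<noteq> 0" by (simp add: xneg_def)
      then have "Cn n k (- i) j" by (rule coneD[OF fac(4)])
      then show "Cp n k i j" by (simp add: Cn_def Cp_def)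
    qed
    ultimately show ?thesis by simp
  qed
  have c2: "cone Cn (rmap xneg ss - 1)"
  proof -
    have "rmap xneg ss - 1 = rmap xneg (ss - 1)" by (simp only: xr.rmap_diff xr.rmap_one)
    moreover have "cone Cn (rmap xneg (ss - 1))"
    proof (rule coneI)
      fix n k i j assume "fromT (rmap xneg (ss - 1)) n k i j \<noteq> 0"
      then have "fromT (ss - 1) n k (- i) j \<noteq> 0" by (simp add: xneg_def)
      then have "Cp n k (- i) j" by (rule coneD[OF fac(3)])
      then show "Cn n k i j" by (simp add: Cn_def Cp_def)
    qed
    ultimately show ?thesis by simp
  qed
  from UF[OF e fac(2) fac(2) fac(3) c1 fac(4) c2] have "ssb = rmap xneg ss" by blast
  then show ?thesis .
qed

end


definition "Nz (n::nat) (k::nat) (i::int) (j::int) \<longleftrightarrow> j = 0 \<and> i \<le> 0"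
definition "Pz (n::nat) (k::nat) (i::int) (j::int) \<longleftrightarrow> j = 0 \<and> 0 < i"

definition zxT :: T where "zxT = monoT 0 1 (-1) 0 1"

lemma z_xbar_eq: "z_xbar = fromT zxT"
  by (intro ext) (simp add: z_xbar_def zxT_def)

definition Einv :: T where "Einv = toT (\<lambda>n k i j. if n = 0 \<and> i = - int k \<and> j = 0 then 1 else 0)"

lemma good_Einv: "ser_good (\<lambda>n k i j. if n = 0 \<and> i = - int k \<and> j = 0 then 1 else 0)"
  unfolding ser_good_def
proof (intro allI)
  fix n k
  have "{p::int\<times>int. (if n = 0 \<and> fst p = - int k \<and> snd p = 0 then 1 else 0) \<noteq> (0::real)} \<subseteq> {(- int k, 0)}"
    by (auto simp: prod_eq_iff split: if_splits)
  then show "finite {p::int\<times>int. (if n = 0 \<and> fst p = - int k \<and> snd p = 0 then 1 else 0) \<noteq> (0::real)}"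
    by (rule finite_subset) simp
qed

lemma fromT_Einv [simp]: "fromT Einv n k i j = (if n = 0 \<and> i = - int k \<and> j = 0 then 1 else 0)"
  unfolding Einv_def by (simp add: fromT_toT good_Einv)

lemma Einv: "(1 - zxT) * Einv = 1"
proof (rule fromT_eqI)
  fix n k i j
  have "(1 - zxT) * Einv = Einv - zxT * Einv" by (simp add: algebra_simps)
  then have "fromT ((1 - zxT) * Einv) n k i j = fromT Einv n k i j - fromT (zxT * Einv) n k i j" by simp
  also have "\<dots> = fromT 1 n k i j"
    unfolding zxT_def fromT_mono_mult by (cases k) auto
  finally show "fromT ((1 - zxT) * Einv) n k i j = fromT 1 n k i j" .
qed

lemma cone_Einv: "cone Nz Einv"
  by (rule coneI) (simp add: Nz_def split: if_splits)

lemma good_x2z: "ser_good (ser_x_to_z (fromT F))"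
  unfolding ser_good_def
proof (intro allI)
  fix n k
  have fin: "finite {p. fromT F n 0 (fst p) (snd p) \<noteq> 0}" using good_fromT[of F] unfolding ser_good_def by blast
  have "{p. ser_x_to_z (fromT F) n k (fst p) (snd p) \<noteq> 0} \<subseteq> (\<lambda>p. (0, snd p)) ` {p. fromT F n 0 (fst p) (snd p) \<noteq> 0}"
  proof
    fix p :: "int \<times> int" assume "p \<in> {p. ser_x_to_z (fromT F) n k (fst p) (snd p) \<noteq> 0}"
    then have "fst p = 0" "fromT F n 0 (int k) (snd p) \<noteq> 0" by (auto simp: ser_x_to_z_def split: if_splits)
    then have "(int k, snd p) \<in> {p. fromT F n 0 (fst p) (snd p) \<noteq> 0}" "p = (\<lambda>p. (0, snd p)) (int k, snd p)"
      by (simp_all add: prod_eq_iff)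
    then show "p \<in> (\<lambda>p. (0, snd p)) ` {p. fromT F n 0 (fst p) (snd p) \<noteq> 0}" by (rule rev_image_eqI)
  qed
  moreover have "finite ((\<lambda>p. (0::int, snd p)) ` {p. fromT F n 0 (fst p) (snd p) \<noteq> 0})" using fin by simp
  ultimately show "finite {p. ser_x_to_z (fromT F) n k (fst p) (snd p) \<noteq> 0}" by (rule finite_subset)
qed

definition zsT :: "T \<Rightarrow> T" where "zsT F = toT (ser_x_to_z (fromT F))"

lemma fromT_zsT [simp]: "fromT (zsT F) n k i j = (if i = 0 then fromT F n 0 (int k) j else 0)"
  unfolding zsT_def by (simp add: fromT_toT good_x2z ser_x_to_z_def)

lemma fromT_zsT': "fromT (zsT F) = ser_x_to_z (fromT F)"
  unfolding zsT_def by (simp add: fromT_toT good_x2z)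

lemma good_Qf: "ser_good (\<lambda>n k i j. if 1 \<le> i then fromT F n 0 (int k + i) j else 0)"
  unfolding ser_good_def
proof (intro allI)
  fix n k
  have fin: "finite {p. fromT F n 0 (fst p) (snd p) \<noteq> 0}" using good_fromT[of F] unfolding ser_good_def by blast
  have "{p. (if 1 \<le> fst p then fromT F n 0 (int k + fst p) (snd p) else 0) \<noteq> 0} \<subseteq>
      (\<lambda>p. (fst p - int k, snd p)) ` {p. fromT F n 0 (fst p) (snd p) \<noteq> 0}"
  proof
    fix p :: "int \<times> int" assume "p \<in> {p. (if 1 \<le> fst p then fromT F n 0 (int k + fst p) (snd p) else 0) \<noteq> 0}"
    then have "fromT F n 0 (int k + fst p) (snd p) \<noteq> 0" by (auto split: if_splits)
    then have "(int k + fst p, snd p) \<in> {p. fromT F n 0 (fst p) (snd p) \<noteq> 0}"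
       "p = (\<lambda>p. (fst p - int k, snd p)) (int k + fst p, snd p)" by (simp_all add: prod_eq_iff)
    then show "p \<in> (\<lambda>p. (fst p - int k, snd p)) ` {p. fromT F n 0 (fst p) (snd p) \<noteq> 0}" by (rule rev_image_eqI)
  qed
  moreover have "finite ((\<lambda>p. (fst p - int k, snd p)) ` {p. fromT F n 0 (fst p) (snd p) \<noteq> 0})" using fin by simp
  ultimately show "finite {p. (if 1 \<le> fst p then fromT F n 0 (int k + fst p) (snd p) else 0) \<noteq> 0}"
    by (rule finite_subset)
qed

definition Qf :: "T \<Rightarrow> T" where "Qf F = toT (\<lambda>n k i j. if 1 \<le> i then fromT F n 0 (int k + i) j else 0)"

lemma fromT_Qf [simp]: "fromT (Qf F) n k i j = (if 1 \<le> i then fromT F n 0 (int k + i) j else 0)"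
  unfolding Qf_def by (simp add: fromT_toT good_Qf)

lemma Q_eq:
  assumes c: "cone (\<lambda>n k i j. k = 0 \<and> 0 \<le> i) F"
  shows "F - zsT F = (1 - zxT) * Qf F"
proof (rule fromT_eqI)
  fix n k i j
  have "(1 - zxT) * Qf F = Qf F - zxT * Qf F" by (simp add: algebra_simps)
  then have "fromT ((1 - zxT) * Qf F) n k i j = fromT (Qf F) n k i j - fromT (zxT * Qf F) n k i j" by simp
  also have "\<dots> = (if 1 \<le> i then fromT F n 0 (int k + i) j else 0)
      - (if 1 \<le> k \<and> 0 \<le> i then fromT F n 0 (int k + i) j else 0)"
    unfolding zxT_def fromT_mono_mult by (cases k) (auto simp: algebra_simps)
  also have "\<dots> = fromT (F - zsT F) n k i j"
  proof -
    have z1: "fromT F n k i j = 0" if "k \<noteq> 0 \<or> i < 0" using coneD'[OF c, where n=n and k=k and i=i and j=j] that by auto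
    show ?thesis
    proof (cases "k = 0")
      case True
      then show ?thesis using z1 by (cases "i = 0") auto
    next
      case False
      then show ?thesis using z1 by (cases "i = 0") auto
    qed
  qed
  finally show "fromT (F - zsT F) n k i j = fromT ((1 - zxT) * Qf F) n k i j" by simp
qed

lemma cone_Qf: "cone (\<lambda>n k i j. j = 0) F \<Longrightarrow> cone Pz (Qf F)"
  by (rule coneI) (auto simp: Pz_def dest: coneD split: if_splits)

lemma cone_zsT: "cone (\<lambda>n k i j. j = 0) F \<Longrightarrow> cone (\<lambda>n k i j. i = 0 \<and> j = 0) (zsT F)"
  by (rule coneI) (auto dest: coneD split: if_splits)

lemma cone_false_zero: "cone (\<lambda>n k i j. False) F \<Longrightarrow> F = 0"
  by (rule fromT_eqI) (simp add: cone_def)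

lemma zs_mult:
  assumes f: "cone Xnn F" and g: "cone Xnn G"
  shows "zsT (F * G) = zsT F * zsT G"
proof -
  have fg: "cone Xnn (F * G)" by (rule cone_Xnn_mult[OF f g])
  have m: "cone Xnn X \<Longrightarrow> cone (\<lambda>n k i j. k = 0 \<and> 0 \<le> i) X" for X by (erule cone_mono) (auto simp: Xnn_def)
  have y: "cone Xnn X \<Longrightarrow> cone (\<lambda>n k i j. j = 0) X" for X by (erule cone_mono) (auto simp: Xnn_def)
  define H where "H = Qf F * G + zsT F * Qf G - Qf (F * G)"
  have eH: "zsT (F * G) - zsT F * zsT G = (1 - zxT) * H"
  proof -
    have "F * G - zsT F * zsT G = (F - zsT F) * G + zsT F * (G - zsT G)" by (simp add: algebra_simps)
    also have "\<dots> = (1 - zxT) * (Qf F * G + zsT F * Qf G)"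
      unfolding Q_eq[OF m[OF f]] Q_eq[OF m[OF g]] by (simp add: algebra_simps)
    finally have a: "F * G - zsT F * zsT G = (1 - zxT) * (Qf F * G + zsT F * Qf G)" .
    have b: "F * G - zsT (F * G) = (1 - zxT) * Qf (F * G)" by (rule Q_eq[OF m[OF fg]])
    have "zsT (F * G) - zsT F * zsT G = (F * G - zsT F * zsT G) - (F * G - zsT (F * G))" by simp
    also have "\<dots> = (1 - zxT) * H" unfolding a b H_def by (simp add: algebra_simps)
    finally show ?thesis .
  qed
  have c1: "cone (\<lambda>n k i j. 0 < i) H"
  proof -
    have a: "cone (\<lambda>n k i j. 0 < i) (Qf F * G)"
      by (rule cone_mult[OF cone_Qf[OF y[OF f]] g]) (auto simp: Pz_def Xnn_def)
    have b: "cone (\<lambda>n k i j. 0 < i) (zsT F * Qf G)"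
      by (rule cone_mult[OF cone_zsT[OF y[OF f]] cone_Qf[OF y[OF g]]]) (auto simp: Pz_def)
    have c: "cone (\<lambda>n k i j. 0 < i) (Qf (F * G))"
      by (rule cone_mono[OF cone_Qf[OF y[OF fg]]]) (auto simp: Pz_def)
    show ?thesis unfolding H_def by (intro cone_diff cone_add a b c)
  qed
  have c2: "cone (\<lambda>n k i j. i \<le> 0) H"
  proof -
    have "H = Einv * ((1 - zxT) * H)" using Einv by (simp add: ac_simps)
    also have "\<dots> = Einv * (zsT (F * G) - zsT F * zsT G)" unfolding eH ..
    finally have e: "H = Einv * (zsT (F * G) - zsT F * zsT G)" .
    have z: "cone (\<lambda>n k i j. i = 0 \<and> j = 0) (zsT (F * G) - zsT F * zsT G)"
    proof (intro cone_diff cone_zsT y fg)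
      show "cone (\<lambda>n k i j. i = 0 \<and> j = 0) (zsT F * zsT G)"
        by (rule cone_mult[OF cone_zsT[OF y[OF f]] cone_zsT[OF y[OF g]]]) auto
    qed
    show ?thesis unfolding e by (rule cone_mult[OF cone_Einv z]) (auto simp: Nz_def)
  qed
  have "H = 0" by (rule cone_false_zero, rule cone_mono[OF cone_conj[OF c1 c2]]) auto
  then show ?thesis using eH by simp
qed

context walkA
begin

lemma cone_ss_Xnn: "cone Xnn ss" by (rule cone_plus1[OF fac(3)]) (auto simp: Cp_def Xnn_def)
lemma cone_dd_Xnp: "cone Xnp dd" by (rule cone_plus1[OF fac(2)]) (auto simp: C0_def Xnp_def)
lemma cone_ssb_Xnp: "cone Xnp ssb" by (rule cone_plus1[OF fac(4)]) (auto simp: Cn_def Xnp_def)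

lemma kernel_split:
  assumes eqK: "KT * F = E - R" and cE: "cone Nz E" and cR: "cone Nz R" and cP: "cone Pz (Ym 0 F - E)"
  shows "F = UT * (dd * ssb * proj PN (ss * E))"
proof -
  have FU: "F = UT * (E - R)"
  proof -
    have "F = (UT * KT) * F" using KU by (simp add: mult.commute)
    then show ?thesis unfolding eqK[symmetric] by (simp add: ac_simps)
  qed
  have yER: "cone (\<lambda>n k i j. j = 0) (E - R)"
    by (intro cone_diff; rule cone_mono, rule cE cR, simp add: Nz_def)
  have Y0: "Ym 0 F = (E - R) * uu 0"
  proof -
    have "Ym 0 F = Ym 0 ((E - R) * UT)" using FU by (simp add: mult.commute)
    also have "\<dots> = (E - R) * Ym 0 UT" by (rule Ym_mult[OF yER])
    finally show ?thesis unfolding uu_def by simp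
  qed
  have wY: "ww * Ym 0 F = E - R"
  proof -
    have "ww * Ym 0 F = (E - R) * (uu 0 * ww)" unfolding Y0 by (simp only: ac_simps)
    then show ?thesis by (simp add: c_w)
  qed
  define v where "v = inv1 (dd * ssb)"
  have ds0: "(dd * ssb) $ 0 = 1" by (simp add: dd0 ssb0)
  have vds: "v * (dd * ssb) = 1" unfolding v_def by (rule inv1'[OF ds0])
  have cv: "cone Xnp v" unfolding v_def
    by (intro cone_Xnp_inv cone_Xnp_mult cone_dd_Xnp cone_ssb_Xnp ds0)
  have sY: "ss * Ym 0 F = v * (E - R)"
  proof -
    have "v * (E - R) = (v * (dd * ssb)) * (ss * Ym 0 F)" unfolding wY[symmetric] ww_def by (simp only: ac_simps)
    then show ?thesis using vds by simp
  qed
  have c1: "cone PN (v * (E - R))"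
    by (rule cone_mult[OF cv cone_diff[OF cE cR]]) (auto simp: Xnp_def Nz_def PN_def)
  have c2: "cone (\<lambda>n k i j. 0 < i) (ss * (Ym 0 F - E))"
    by (rule cone_mult[OF cone_ss_Xnn cP]) (auto simp: Xnn_def Pz_def)
  have "v * (E - R) = proj PN (ss * Ym 0 F)" using sY proj_id[OF c1] by simp
  also have "ss * Ym 0 F = ss * E + ss * (Ym 0 F - E)" by (simp add: algebra_simps)
  also have "proj PN (ss * E + ss * (Ym 0 F - E)) = proj PN (ss * E)"
    using proj_zero[OF c2, of PN] by (simp add: proj_add PN_def)
  finally have vE: "v * (E - R) = proj PN (ss * E)" .
  have "E - R = (dd * ssb) * (v * (E - R))" using vds by (simp add: ac_simps)
  then have "E - R = dd * ssb * proj PN (ss * E)" unfolding vE by simp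
  then show ?thesis using FU by simp
qed

lemma proj_ss_one: "proj PN (ss * 1) = 1"
proof -
  have "proj PN (ss * 1) = proj PN 1 + proj PN (ss - 1)" by (simp add: proj_add[symmetric])
  also have "proj PN 1 = 1" by (rule proj_id, rule cone_one) (simp add: PN_def)
  also have "proj PN (ss - 1) = 0" by (rule proj_zero[OF fac(3)]) (auto simp: Cp_def PN_def)
  finally show ?thesis by simp
qed

lemma proj_ss_Einv: "proj PN (ss * Einv) = zsT ss * Einv"
proof -
  have m: "cone (\<lambda>n k i j. k = 0 \<and> 0 \<le> i) ss" by (rule cone_mono[OF cone_ss_Xnn]) (auto simp: Xnn_def)
  have y: "cone (\<lambda>n k i j. j = 0) ss" by (rule cone_mono[OF cone_ss_Xnn]) (auto simp: Xnn_def)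
  have "ss * Einv = zsT ss * Einv + (ss - zsT ss) * Einv" by (simp add: algebra_simps)
  also have "(ss - zsT ss) * Einv = Qf ss * ((1 - zxT) * Einv)" unfolding Q_eq[OF m] by (simp only: ac_simps)
  also have "\<dots> = Qf ss" by (simp add: Einv)
  finally have e: "ss * Einv = zsT ss * Einv + Qf ss" .
  have a: "proj PN (zsT ss * Einv) = zsT ss * Einv"
    by (rule proj_id, rule cone_mult[OF cone_zsT[OF y] cone_Einv]) (auto simp: Nz_def PN_def)
  have b: "proj PN (Qf ss) = 0" by (rule proj_zero[OF cone_Qf[OF y]]) (auto simp: Pz_def PN_def)
  show ?thesis unfolding e proj_add a b by simp
qed

end


definition "Wset A k n i j = {ss. set ss \<subseteq> A \<and> length ss = n \<and> walk_pos k ss n = (i, j)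
                                    \<and> (\<forall>m\<in>{1..n}. \<not> in_H (walk_pos k ss m))}"

lemma walk_count_Wset: "walk_count A k n i j = card (Wset A k n i j)"
  unfolding walk_count_def Wset_def by simp

lemma finite_Wset: "finite A \<Longrightarrow> finite (Wset A k n i j)"
proof -
  assume "finite A"
  then have "finite {ss. set ss \<subseteq> A \<and> length ss = n}" by (rule finite_lists_length_eq)
  moreover have "Wset A k n i j \<subseteq> {ss. set ss \<subseteq> A \<and> length ss = n}" unfolding Wset_def by blast
  ultimately show ?thesis by (rule finite_subset[rotated])
qed

lemma walk_pos_append_le: "m \<le> length ss \<Longrightarrow> walk_pos k (ss @ [p]) m = walk_pos k ss m"
  unfolding walk_pos_def by simp

lemma walk_pos_append_last: "walk_pos k (ss @ [p]) (Suc (length ss)) = (fst (walk_pos k ss (length ss)) + fst p, snd (walk_pos k ss (length ss)) + snd p)"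
  unfolding walk_pos_def by simp

lemma walk_count_0: "walk_count A k 0 i j = (if i = k \<and> j = 0 then 1 else 0)"
proof -
  have "Wset A k 0 i j = (if i = k \<and> j = 0 then {[]} else {})"
    unfolding Wset_def walk_pos_def by auto
  then show ?thesis unfolding walk_count_Wset by simp
qed

lemma Wset_Suc:
  assumes "\<not> in_H (i, j)"
  shows "Wset A k (Suc n) i j = (\<Union>p\<in>A. (\<lambda>ss. ss @ [p]) ` Wset A k n (i - fst p) (j - snd p))"
proof
  show "Wset A k (Suc n) i j \<subseteq> (\<Union>p\<in>A. (\<lambda>ss. ss @ [p]) ` Wset A k n (i - fst p) (j - snd p))"
  proof
    fix xs assume xs: "xs \<in> Wset A k (Suc n) i j"
    then have len: "length xs = Suc n" unfolding Wset_def by blast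
    then obtain ss p where e: "xs = ss @ [p]" by (metis append_butlast_last_id length_0_conv nat.distinct(1))
    have lss: "length ss = n" using len e by simp
    have pA: "p \<in> A" and sA: "set ss \<subseteq> A" using xs e unfolding Wset_def by auto
    have pos: "walk_pos k xs (Suc n) = (i, j)" using xs unfolding Wset_def by blast
    then have "walk_pos k ss n = (i - fst p, j - snd p)"
      using walk_pos_append_last[of k ss p] lss e by (simp add: prod_eq_iff)
    moreover have "\<forall>m\<in>{1..n}. \<not> in_H (walk_pos k ss m)"
    proof
      fix m assume m: "m \<in> {1..n}"
      then have "\<not> in_H (walk_pos k xs m)" using xs unfolding Wset_def by auto
      then show "\<not> in_H (walk_pos k ss m)" using walk_pos_append_le[of m ss k p] m lss e by simp
    qed
    ultimately have "ss \<in> Wset A k n (i - fst p) (j - snd p)" unfolding Wset_def using sA lss by blast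
    then show "xs \<in> (\<Union>p\<in>A. (\<lambda>ss. ss @ [p]) ` Wset A k n (i - fst p) (j - snd p))" using pA e by blast
  qed
  show "(\<Union>p\<in>A. (\<lambda>ss. ss @ [p]) ` Wset A k n (i - fst p) (j - snd p)) \<subseteq> Wset A k (Suc n) i j"
  proof
    fix xs assume "xs \<in> (\<Union>p\<in>A. (\<lambda>ss. ss @ [p]) ` Wset A k n (i - fst p) (j - snd p))"
    then obtain p ss where pA: "p \<in> A" and ss: "ss \<in> Wset A k n (i - fst p) (j - snd p)" and e: "xs = ss @ [p]" by blast
    have lss: "length ss = n" and sA: "set ss \<subseteq> A" and pos: "walk_pos k ss n = (i - fst p, j - snd p)"
      and av: "\<forall>m\<in>{1..n}. \<not> in_H (walk_pos k ss m)" using ss unfolding Wset_def by blast+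
    have pos': "walk_pos k xs (Suc n) = (i, j)" using walk_pos_append_last[of k ss p] lss pos e by simp
    have "\<forall>m\<in>{1..Suc n}. \<not> in_H (walk_pos k xs m)"
    proof
      fix m assume m: "m \<in> {1..Suc n}"
      show "\<not> in_H (walk_pos k xs m)"
      proof (cases "m = Suc n")
        case True then show ?thesis using pos' assms by simp
      next
        case False
        then have "m \<in> {1..n}" using m by auto
        then show ?thesis using av walk_pos_append_le[of m ss k p] lss e by simp
      qed
    qed
    then show "xs \<in> Wset A k (Suc n) i j" unfolding Wset_def using pos' sA pA lss e by auto
  qed
qed

lemma walk_count_Suc:
  assumes finA: "finite A"
  shows "walk_count A k (Suc n) i j = (if in_H (i, j) then 0 else (\<Sum>p\<in>A. walk_count A k n (i - fst p) (j - snd p)))"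
proof (cases "in_H (i, j)")
  case True
  have "False" if "ss \<in> Wset A k (Suc n) i j" for ss
  proof -
    have a: "walk_pos k ss (Suc n) = (i, j)" "\<forall>m\<in>{1..Suc n}. \<not> in_H (walk_pos k ss m)"
      using that unfolding Wset_def by blast+
    have "Suc n \<in> {1..Suc n}" by simp
    with a(2) have "\<not> in_H (walk_pos k ss (Suc n))" by blast
    then show False using True a(1) by simp
  qed
  then have "Wset A k (Suc n) i j = {}" by blast
  then show ?thesis using True unfolding walk_count_Wset by simp
next
  case False
  have "card (Wset A k (Suc n) i j) = (\<Sum>p\<in>A. card ((\<lambda>ss. ss @ [p]) ` Wset A k n (i - fst p) (j - snd p)))"
    unfolding Wset_Suc[OF False]
  proof (rule card_UN_disjoint[OF finA])
    show "\<forall>p\<in>A. finite ((\<lambda>ss. ss @ [p]) ` Wset A k n (i - fst p) (j - snd p))" using finite_Wset[OF finA] by blast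
    show "\<forall>p\<in>A. \<forall>q\<in>A. p \<noteq> q \<longrightarrow> (\<lambda>ss. ss @ [p]) ` Wset A k n (i - fst p) (j - snd p) \<inter> (\<lambda>ss. ss @ [q]) ` Wset A k n (i - fst q) (j - snd q) = {}"
      by auto
  qed
  also have "\<dots> = (\<Sum>p\<in>A. card (Wset A k n (i - fst p) (j - snd p)))"
    by (intro sum.cong refl card_image) (simp add: inj_on_def)
  finally show ?thesis using False unfolding walk_count_Wset by simp
qed

lemma good_walk: "finite A \<Longrightarrow> ser_good (\<lambda>n k i j. real (walk_count A (f k) n i j))"
  unfolding ser_good_def
proof (intro allI)
  fix n k assume finA: "finite A"
  have "{p. real (walk_count A (f k) n (fst p) (snd p)) \<noteq> 0} \<subseteq> (\<lambda>ss. walk_pos (f k) ss n) ` {ss. set ss \<subseteq> A \<and> length ss = n}"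
  proof
    fix p :: "int \<times> int" assume "p \<in> {p. real (walk_count A (f k) n (fst p) (snd p)) \<noteq> 0}"
    then have "Wset A (f k) n (fst p) (snd p) \<noteq> {}" unfolding walk_count_Wset by auto
    then obtain ss where "ss \<in> Wset A (f k) n (fst p) (snd p)" by blast
    then have "set ss \<subseteq> A \<and> length ss = n" "p = walk_pos (f k) ss n" unfolding Wset_def by auto
    then show "p \<in> (\<lambda>ss. walk_pos (f k) ss n) ` {ss. set ss \<subseteq> A \<and> length ss = n}" by blast
  qed
  moreover have "finite ((\<lambda>ss. walk_pos (f k) ss n) ` {ss. set ss \<subseteq> A \<and> length ss = n})"
    using finite_lists_length_eq[OF finA] by simp
  ultimately show "finite {p. real (walk_count A (f k) n (fst p) (snd p)) \<noteq> 0}" by (rule finite_subset)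
qed


context walkA
begin

lemma func_eq:
  assumes g0: "\<And>k i j. fromT G 0 k i j = fromT E 0 k i j"
    and gS: "\<And>n k i j. fromT G (Suc n) k i j = (if j = 0 \<and> i \<le> 0 then 0 else fromT (stepT * G) (Suc n) k i j)"
    and eS: "\<And>n k i j. fromT E (Suc n) k i j = 0"
    and cE: "cone Nz E"
  shows "KT * G = E - proj Nz (stepT * G)" "cone Pz (Ym 0 G - E)"
proof -
  show "KT * G = E - proj Nz (stepT * G)"
  proof (rule fromT_eqI)
    fix n k i j
    have e: "KT * G = G - stepT * G" unfolding KT_def by (simp add: algebra_simps)
    show "fromT (KT * G) n k i j = fromT (E - proj Nz (stepT * G)) n k i j"
    proof (cases n)
      case 0
      then show ?thesis unfolding e by (simp add: g0 fromT_stepT_mult)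
    next
      case (Suc m)
      then show ?thesis unfolding e by (simp add: gS eS Nz_def)
    qed
  qed
  show "cone Pz (Ym 0 G - E)"
  proof (rule coneI)
    fix n k i j assume nz: "fromT (Ym 0 G - E) n k i j \<noteq> 0"
    have Ej: "j \<noteq> 0 \<Longrightarrow> fromT E n k i j = 0" by (rule coneD'[OF cE]) (simp add: Nz_def)
    have j0: "j = 0"
    proof (rule ccontr)
      assume "j \<noteq> 0" then show False using nz Ej by simp
    qed
    have "0 < i"
    proof (rule ccontr)
      assume "\<not> 0 < i"
      then have i0: "i \<le> 0" by simp
      show False
      proof (cases n)
        case 0 then show False using nz j0 g0 by simp
      next
        case (Suc m) then show False using nz j0 i0 gS eS by simp
      qed
    qed
    then show "Pz n k i j" using j0 by (simp add: Pz_def)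
  qed
qed

definition "WT = toT (Sminus_ser A)"
definition "ST = toT (S_ser A)"

lemma good_Sminus: "ser_good (Sminus_ser A)"
  unfolding Sminus_ser_def by (rule good_walk[OF finA])

lemma good_S: "ser_good (S_ser A)"
proof (rule good_subset[OF good_walk[OF finA, of "\<lambda>k. 0"]])
  fix n k i j assume "S_ser A n k i j \<noteq> 0"
  then show "real (walk_count A 0 n i j) \<noteq> 0" unfolding S_ser_def by (simp split: if_splits)
qed

lemma fromT_WT: "fromT WT n k i j = real (walk_count A (- int k) n i j)"
  unfolding WT_def by (simp add: fromT_toT good_Sminus Sminus_ser_def)

lemma fromT_ST: "fromT ST n k i j = (if k = 0 then real (walk_count A 0 n i j) else 0)"
  unfolding ST_def by (simp add: fromT_toT good_S S_ser_def)

lemma in_H_iff: "in_H (i, j) \<longleftrightarrow> j = 0 \<and> i \<le> 0"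
  by (auto simp: in_H_def)

lemma WT_eq: "WT = UT * (dd * ssb * (zsT ss * Einv))"
proof -
  have g0: "fromT WT 0 k i j = fromT Einv 0 k i j" for k i j
    by (simp add: fromT_WT walk_count_0)
  have gS: "fromT WT (Suc n) k i j = (if j = 0 \<and> i \<le> 0 then 0 else fromT (stepT * WT) (Suc n) k i j)" for n k i j
    by (simp add: fromT_WT walk_count_Suc[OF finA] in_H_iff fromT_stepT_mult)
  have eS: "fromT Einv (Suc n) k i j = 0" for n k i j by simp
  note fe = func_eq[OF g0 gS eS cone_Einv]
  have "WT = UT * (dd * ssb * proj PN (ss * Einv))"
    by (rule kernel_split[OF fe(1) cone_Einv cone_proj fe(2)])
  then show ?thesis by (simp add: proj_ss_Einv)
qed

lemma ST_eq: "ST = UT * (dd * ssb)"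
proof -
  have g0: "fromT ST 0 k i j = fromT 1 0 k i j" for k i j
    by (simp add: fromT_ST walk_count_0)
  have gS: "fromT ST (Suc n) k i j = (if j = 0 \<and> i \<le> 0 then 0 else fromT (stepT * ST) (Suc n) k i j)" for n k i j
    by (simp add: fromT_ST walk_count_Suc[OF finA] in_H_iff fromT_stepT_mult)
  have eS: "fromT 1 (Suc n) k i j = 0" for n k i j by simp
  have c1: "cone Nz 1" by (rule cone_one) (simp add: Nz_def)
  note fe = func_eq[OF g0 gS eS c1]
  have "ST = UT * (dd * ssb * proj PN (ss * 1))"
    by (rule kernel_split[OF fe(1) c1 cone_proj fe(2)])
  then show ?thesis unfolding proj_ss_one by simp
qed

end


lemma ser_sqrt_T:
  assumes Z0: "Z $ 0 = 1"
  shows "ser_sqrt (fromT (Z * Z)) = fromT Z"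
  unfolding ser_sqrt_def
proof (rule the_equality)
  have "fromT Z 0 0 0 0 = fromT 1 0 0 0 0" using nth_eqD[of Z 0 1] Z0 by simp
  then show "ser_good (fromT Z) \<and> fromT Z 0 0 0 0 = 1 \<and> ser_mult (fromT Z) (fromT Z) = fromT (Z * Z)"
    by (simp add: fromT_mult)
next
  fix g assume g: "ser_good g \<and> g 0 0 0 0 = 1 \<and> ser_mult g g = fromT (Z * Z)"
  then have "fromT (toT g * toT g) = fromT (Z * Z)" by (simp add: fromT_mult fromT_toT)
  then have e: "toT g * toT g = Z * Z" by (rule fromT_inj)
  have "(toT g - Z) * (toT g + Z) = 0" using e by (simp add: algebra_simps)
  then have "toT g = Z \<or> toT g = - Z" by (auto simp: eq_neg_iff_add_eq_0)
  moreover have "toT g \<noteq> - Z"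
  proof
    assume "toT g = - Z"
    then have "fromT (toT g) 0 0 0 0 = - fromT Z 0 0 0 0" by simp
    moreover have "fromT Z 0 0 0 0 = 1" using nth_eqD[of Z 0 1] Z0 by simp
    ultimately show False using g by (simp add: fromT_toT)
  qed
  ultimately have "toT g = Z" by blast
  then show "g = fromT Z" using g by (metis fromT_toT)
qed

lemma ser_inv_T:
  assumes FG: "F * G = 1"
  shows "ser_inv (fromT F) = fromT G"
  unfolding ser_inv_def
proof (rule the_equality)
  show "ser_good (fromT G) \<and> ser_mult (fromT F) (fromT G) = ser_one"
    by (simp add: fromT_mult[symmetric] FG ser_one_T)
next
  fix g assume g: "ser_good g \<and> ser_mult (fromT F) g = ser_one"
  then have "fromT (F * toT g) = fromT 1" by (simp add: fromT_mult fromT_toT ser_one_T)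
  then have "F * toT g = 1" by (rule fromT_inj)
  then have "toT g = G" using FG inv_unique by blast
  then show "g = fromT G" using g by (metis fromT_toT)
qed

lemma ser_at_xbar_T: "ser_at_xbar (fromT F) = fromT (rmap xneg F)"
  by (intro ext) (simp add: ser_at_xbar_def xneg_def)

context walkA
begin

lemma sq_cone:
  assumes c: "cone C (F - 1)"
    and Cadd: "\<And>n1 k1 i1 j1 n2 k2 i2 j2. C n1 k1 i1 j1 \<Longrightarrow> C n2 k2 i2 j2 \<Longrightarrow> C (n1+n2) (k1+k2) (i1+i2) (j1+j2)"
  shows "cone C (F * F - 1)"
proof -
  have e: "F * F - 1 = (F - 1) * (F - 1) + (F - 1) + (F - 1)" by (simp add: algebra_simps)
  have "cone C ((F - 1) * (F - 1))" by (rule cone_mult[OF c c]) (erule (1) Cadd)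
  then show ?thesis unfolding e using c by (intro cone_add)
qed

lemma dd2: "cone C0 (dd * dd - 1)" by (rule sq_cone[OF fac(2)]) (auto simp: C0_def)
lemma ss2: "cone Cp (ss * ss - 1)" by (rule sq_cone[OF fac(3)]) (auto simp: Cp_def)
lemma ssb2: "cone Cn (ssb * ssb - 1)" by (rule sq_cone[OF fac(4)]) (auto simp: Cn_def)

lemma delta_sq: "deltaT = (dd * dd) * (ss * ss) * (ssb * ssb)"
  using fac(1) unfolding ww_def by (simp add: ac_simps)

lemma cf_iff: "canonical_factorization A tr \<longleftrightarrow> tr = (fromT (dd * dd), fromT (ss * ss), fromT (ssb * ssb))"
proof
  assume "tr = (fromT (dd * dd), fromT (ss * ss), fromT (ssb * ssb))"
  moreover have "canonical_factorization A (fromT (dd * dd), fromT (ss * ss), fromT (ssb * ssb))"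
    unfolding canonical_factorization_def
  proof (simp only: prod.case, intro conjI allI impI)
    have cD: "cone X0 (dd * dd)" by (rule cone_plus1[OF dd2]) (auto simp: C0_def X0_def)
    have cP: "cone Xnn (ss * ss)" by (rule cone_plus1[OF ss2]) (auto simp: Cp_def Xnn_def)
    have cN: "cone Xnp (ssb * ssb)" by (rule cone_plus1[OF ssb2]) (auto simp: Cn_def Xnp_def)
    fix n k i j
    show "fromT (dd * dd) n k i j \<noteq> 0 \<Longrightarrow> k = 0" "fromT (dd * dd) n k i j \<noteq> 0 \<Longrightarrow> i = 0"
      "fromT (dd * dd) n k i j \<noteq> 0 \<Longrightarrow> j = 0"
      using coneD[OF cD, of n k i j] by (auto simp: X0_def)
    show "fromT (ss * ss) n k i j \<noteq> 0 \<Longrightarrow> k = 0" "fromT (ss * ss) n k i j \<noteq> 0 \<Longrightarrow> j = 0"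
      "fromT (ss * ss) n k i j \<noteq> 0 \<Longrightarrow> 0 \<le> i"
      using coneD[OF cP, of n k i j] by (auto simp: Xnn_def)
    show "fromT (ssb * ssb) n k i j \<noteq> 0 \<Longrightarrow> k = 0" "fromT (ssb * ssb) n k i j \<noteq> 0 \<Longrightarrow> j = 0"
      "fromT (ssb * ssb) n k i j \<noteq> 0 \<Longrightarrow> i \<le> 0"
      using coneD[OF cN, of n k i j] by (auto simp: Xnp_def)
  next
    show "ser_good (fromT (ss * ss))" "ser_good (fromT (ssb * ssb))" by simp_all
  next
    have "(dd * dd) $ 0 = (1::T) $ 0" by (simp add: dd0)
    from nth_eqD[OF this] show "fromT (dd * dd) 0 0 0 0 = 1" by simp
  next
    fix i
    have "(ss * ss) $ 0 = (1::T) $ 0" by (simp add: ss0)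
    from nth_eqD[OF this] show "fromT (ss * ss) 0 0 i 0 = (if i = 0 then 1 else 0)" by simp
    have "(ssb * ssb) $ 0 = (1::T) $ 0" by (simp add: ssb0)
    from nth_eqD[OF this] show "fromT (ssb * ssb) 0 0 i 0 = (if i = 0 then 1 else 0)" by simp
  next
    fix n
    have "fromT (ss * ss - 1) n 0 0 0 = 0" by (rule coneD'[OF ss2]) (simp add: Cp_def)
    then show "fromT (ss * ss) n 0 0 0 = (if n = 0 then 1 else 0)" by simp
    have "fromT (ssb * ssb - 1) n 0 0 0 = 0" by (rule coneD'[OF ssb2]) (simp add: Cn_def)
    then show "fromT (ssb * ssb) n 0 0 0 = (if n = 0 then 1 else 0)" by simp
  next
    show "delta_ser A = ser_mult (fromT (dd * dd)) (ser_mult (fromT (ss * ss)) (fromT (ssb * ssb)))"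
      by (simp add: delta_eq fromT_mult[symmetric] delta_sq ac_simps)
  qed
  ultimately show "canonical_factorization A tr" by simp
next
  assume cf: "canonical_factorization A tr"
  obtain D Dl Dlb where tr: "tr = (D, Dl, Dlb)" by (cases tr) auto
  from cf[unfolded tr canonical_factorization_def prod.case]
  have hD: "\<And>n k i j. D n k i j \<noteq> 0 \<Longrightarrow> k = 0 \<and> i = 0 \<and> j = 0"
    and hDl: "\<And>n k i j. Dl n k i j \<noteq> 0 \<Longrightarrow> k = 0 \<and> j = 0 \<and> i \<ge> 0" and gDl: "ser_good Dl"
    and hDlb: "\<And>n k i j. Dlb n k i j \<noteq> 0 \<Longrightarrow> k = 0 \<and> j = 0 \<and> i \<le> 0" and gDlb: "ser_good Dlb"
    and D0: "D 0 0 0 0 = 1"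
    and Dl0: "\<And>i. Dl 0 0 i 0 = (if i = 0 then 1 else 0)"
    and Dlb0: "\<And>i. Dlb 0 0 i 0 = (if i = 0 then 1 else 0)"
    and Dln: "\<And>n. Dl n 0 0 0 = (if n = 0 then 1 else 0)"
    and Dlbn: "\<And>n. Dlb n 0 0 0 = (if n = 0 then 1 else 0)"
    and dprod: "delta_ser A = ser_mult D (ser_mult Dl Dlb)"
    by blast+
  have gD: "ser_good D"
    unfolding ser_good_def
  proof (intro allI)
    fix n k
    have "{p. D n k (fst p) (snd p) \<noteq> 0} \<subseteq> {(0, 0)}" using hD by (auto simp: prod_eq_iff)
    then show "finite {p. D n k (fst p) (snd p) \<noteq> 0}" by (rule finite_subset) simp
  qed
  have fD: "fromT (toT D) = D" by (rule fromT_toT[OF gD])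
  have fDl: "fromT (toT Dl) = Dl" by (rule fromT_toT[OF gDl])
  have fDlb: "fromT (toT Dlb) = Dlb" by (rule fromT_toT[OF gDlb])
  have c1: "cone C0 (toT D - 1)"
  proof (rule coneI)
    fix n k i j assume nz: "fromT (toT D - 1) n k i j \<noteq> 0"
    then have "D n k i j \<noteq> 0 \<or> (n = 0 \<and> k = 0 \<and> i = 0 \<and> j = 0)" using fD by (auto split: if_splits)
    then have kij: "k = 0 \<and> i = 0 \<and> j = 0" using hD by blast
    have "n \<noteq> 0"
    proof
      assume "n = 0" then show False using nz kij D0 fD by simp
    qed
    then show "C0 n k i j" using kij by (simp add: C0_def)
  qed
  have c2: "cone Cp (toT Dl - 1)"
  proof (rule coneI)
    fix n k i j assume nz: "fromT (toT Dl - 1) n k i j \<noteq> 0"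
    then have "Dl n k i j \<noteq> 0 \<or> (n = 0 \<and> k = 0 \<and> i = 0 \<and> j = 0)" using fDl by (auto split: if_splits)
    then have kij: "k = 0 \<and> j = 0 \<and> 0 \<le> i" using hDl by fastforce
    have "n \<noteq> 0"
    proof
      assume "n = 0" then show False using nz kij Dl0[of i] fDl by simp
    qed
    moreover have "i \<noteq> 0"
    proof
      assume "i = 0" then show False using nz kij Dln[of n] fDl by simp
    qed
    ultimately show "Cp n k i j" using kij by (simp add: Cp_def)
  qed
  have c3: "cone Cn (toT Dlb - 1)"
  proof (rule coneI)
    fix n k i j assume nz: "fromT (toT Dlb - 1) n k i j \<noteq> 0"
    then have "Dlb n k i j \<noteq> 0 \<or> (n = 0 \<and> k = 0 \<and> i = 0 \<and> j = 0)" using fDlb by (auto split: if_splits)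
    then have kij: "k = 0 \<and> j = 0 \<and> i \<le> 0" using hDlb by fastforce
    have "n \<noteq> 0"
    proof
      assume "n = 0" then show False using nz kij Dlb0[of i] fDlb by simp
    qed
    moreover have "i \<noteq> 0"
    proof
      assume "i = 0" then show False using nz kij Dlbn[of n] fDlb by simp
    qed
    ultimately show "Cn n k i j" using kij by (simp add: Cn_def)
  qed
  have "fromT deltaT = fromT (toT D * toT Dl * toT Dlb)"
    using dprod unfolding delta_eq by (simp add: ser_mult_T gD gDl gDlb good_mult fromT_toT ac_simps)
  then have "(dd * dd) * (ss * ss) * (ssb * ssb) = toT D * toT Dl * toT Dlb"
    using delta_sq fromT_inj by metis
  from UF[OF this dd2 c1 ss2 c2 ssb2 c3]
  have "toT D = dd * dd" "toT Dl = ss * ss" "toT Dlb = ssb * ssb" by simp_all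
  then show "tr = (fromT (dd * dd), fromT (ss * ss), fromT (ssb * ssb))"
    using tr fD fDl fDlb by metis
qed

lemma the_cf: "(THE tr. canonical_factorization A tr) = (fromT (dd * dd), fromT (ss * ss), fromT (ssb * ssb))"
  by (simp add: cf_iff)

lemma canD_eq: "canD A = fromT (dd * dd)"
  unfolding canD_def the_cf by simp

lemma canDelta_eq: "canDelta A = fromT (ss * ss)"
  unfolding canDelta_def the_cf by simp

lemma zs0: "zsT ss $ 0 = 1"
proof -
  have "ss $ 0 = (1::T) $ 0" by (simp add: ss0)
  from nth_eqD[OF this] have "fromT (zsT ss) 0 k i j = fromT 1 0 k i j" for k i j by simp
  then have "zsT ss $ 0 = (1::T) $ 0" by (rule nth_eqI)
  then show ?thesis by simp
qed

theorem main:
  shows "Sminus_ser A =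
           ser_mult (ser_mult (ser_sqrt (ser_mult (canD A)
                                 (ser_mult (ser_at_xbar (canDelta A)) (ser_x_to_z (canDelta A)))))
                              (ser_inv (ser_diff ser_one z_xbar)))
                    (ser_inv (K_ser A))
       \<and> Sminus_ser A =
           ser_mult (ser_mult (ser_sqrt (ser_x_to_z (canDelta A)))
                              (ser_inv (ser_diff ser_one z_xbar)))
                    (S_ser A)"
proof -
  have zz: "ser_x_to_z (canDelta A) = fromT (zsT ss * zsT ss)"
    unfolding canDelta_eq fromT_zsT'[symmetric] zs_mult[OF cone_ss_Xnn cone_ss_Xnn] ..
  have xb: "ser_at_xbar (canDelta A) = fromT (ssb * ssb)"
    unfolding canDelta_eq ser_at_xbar_T by (simp add: xr.rmap_mult ssb_xbar)
  have inner: "ser_mult (canD A) (ser_mult (ser_at_xbar (canDelta A)) (ser_x_to_z (canDelta A)))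
      = fromT ((dd * ssb * zsT ss) * (dd * ssb * zsT ss))"
    unfolding zz xb canD_eq fromT_mult[symmetric] by (simp add: ac_simps)
  have Z0: "(dd * ssb * zsT ss) $ 0 = 1" by (simp add: dd0 ssb0 zs0)
  have sq1: "ser_sqrt (ser_mult (canD A) (ser_mult (ser_at_xbar (canDelta A)) (ser_x_to_z (canDelta A))))
      = fromT (dd * ssb * zsT ss)"
    unfolding inner by (rule ser_sqrt_T[OF Z0])
  have sq2: "ser_sqrt (ser_x_to_z (canDelta A)) = fromT (zsT ss)"
    unfolding zz by (rule ser_sqrt_T[OF zs0])
  have iz: "ser_inv (ser_diff ser_one z_xbar) = fromT Einv"
  proof -
    have "ser_diff ser_one z_xbar = fromT (1 - zxT)"
      by (intro ext) (simp add: ser_diff_def ser_one_def z_xbar_eq)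
    then show ?thesis using ser_inv_T[OF Einv] by simp
  qed
  have iK: "ser_inv (K_ser A) = fromT UT"
    unfolding K_ser_eq by (rule ser_inv_T[OF KU])
  have W: "Sminus_ser A = fromT WT" unfolding WT_def by (simp add: fromT_toT good_Sminus)
  have S: "S_ser A = fromT ST" unfolding ST_def by (simp add: fromT_toT good_S)
  show ?thesis
    unfolding sq1 sq2 iz iK W S fromT_mult[symmetric] WT_eq ST_eq
    by (simp add: ac_simps)
qed

end

theorem mainTheorem12:
  fixes A :: "(int \<times> int) set"
  assumes "finite A"
    and "\<And>i j. (i, j) \<in> A \<Longrightarrow> (i, - j) \<in> A"
    and "\<And>i j. (i, j) \<in> A \<Longrightarrow> \<bar>j\<bar> \<le> 1"
    and "\<exists>i. (i, 1) \<in> A"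
    and "\<And>i j. (i, j) \<in> A \<Longrightarrow> (- i, - j) \<in> A"
  shows "Sminus_ser A =
           ser_mult (ser_mult (ser_sqrt (ser_mult (canD A)
                                 (ser_mult (ser_at_xbar (canDelta A)) (ser_x_to_z (canDelta A)))))
                              (ser_inv (ser_diff ser_one z_xbar)))
                    (ser_inv (K_ser A))
       \<and> Sminus_ser A =
           ser_mult (ser_mult (ser_sqrt (ser_x_to_z (canDelta A)))
                              (ser_inv (ser_diff ser_one z_xbar)))
                    (S_ser A)"
proof -
  interpret walkA A
    by unfold_locales (use assms in blast)+
  show ?thesis by (rule main)
qed


end
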